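(* Let $T$ be a bounded-degree tree with initial vertex weights. The following set of operations has a simple RC implementation: $\mathrm{SubtractWeight}(v,w)$, which subtracts $w$ from the weight of vertex $v$; $\mathrm{JoinEdge}(e)$, which marks tree edge $e$ as joined (initially no edge is joined); and $\mathrm{QueryWeight}(v)$, which returns the total weight of the connected component containing $v$ in the subgraph consisting of all vertices and the joined edges.
   Context: RC tree: tree contraction repeatedly applies, in parallel to independent sets of vertices, rake (remove a leaf and merge it into its neighbor) and compress (remove a degree-2 vertex, replacing its two incident edges by one edge joining its neighbors). The RC tree records the resulting recursive clustering. A cluster is a connected set of vertices and edges of $T$; its boundary vertices are the vertices outside it that are endpoints of its edges; every cluster has at most two boundary vertices (binary: two, unary: one, root/nullary: none). Leaves of the RC tree are the vertices and edges of $T$. Each internal cluster is the disjoint union of its children, exactly one of which is a single vertex (its representative, the vertex removed by the corresponding rake/compress), the others being exactly the clusters having the representative as a boundary vertex. Simple RC implementation: the implementation uses an RC tree and (1) maintains at each cluster a value computable in constant time from its children's values; (2) each query traverses from a leaf of the RC tree towards the root, examining only values at visited clusters and their children, with constant time per value and constant space; (3) each update changes the value of one leaf using an associative constant-time operation and then reevaluates all values on the path from that leaf to the root. *)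

theory Defs
  imports Complex_Main
begin

definition adj_rel :: "'a set set \<Rightarrow> ('a \<times> 'a) set" where
  "adj_rel E = {(x, y). {x, y} \<in> E}"

definition is_tree :: "'a set \<Rightarrow> 'a set set \<Rightarrow> bool" where
  "is_tree V E \<longleftrightarrow> finite V \<and> V \<noteq> {} \<and>
     E \<subseteq> {{u, w} | u w. u \<in> V \<and> w \<in> V \<and> u \<noteq> w} \<and>
     (\<forall>u\<in>V. \<forall>w\<in>V. (u, w) \<in> (adj_rel E)\<^sup>*) \<and>
     (\<comment> \<open>acyclic: every edge is a bridge\<close>
      \<forall>e\<in>E. \<forall>u w. e = {u, w} \<longrightarrow> (u, w) \<notin> (adj_rel (E - {e}))\<^sup>*)"

definition degree_bounded :: "nat \<Rightarrow> 'a set \<Rightarrow> 'a set set \<Rightarrow> bool" where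
  "degree_bounded d V E \<longleftrightarrow> (\<forall>v\<in>V. card {e\<in>E. v \<in> e} \<le> d)"

text \<open>Elements of T: vertices (Inl v) and edges (Inr e). A cluster is a set of elements.\<close>

type_synonym 'a elem = "'a + 'a set"
type_synonym 'a cluster = "'a elem set"

definition elems :: "'a set \<Rightarrow> 'a set set \<Rightarrow> 'a cluster" where
  "elems V E = Inl ` V \<union> Inr ` E"

definition inc_rel :: "('a elem \<times> 'a elem) set" where
  "inc_rel = {(Inl v, Inr e) | v e. v \<in> e} \<union> {(Inr e, Inl v) | v e. v \<in> e}"

definition cluster_connected :: "'a cluster \<Rightarrow> bool" where
  "cluster_connected X \<longleftrightarrow> X \<noteq> {} \<and>
     (\<forall>x\<in>X. \<forall>y\<in>X. (x, y) \<in> (inc_rel \<inter> (X \<times> X))\<^sup>*)"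

definition boundary :: "'a cluster \<Rightarrow> 'a set" where
  "boundary X = {u. Inl u \<notin> X \<and> (\<exists>e. Inr e \<in> X \<and> u \<in> e)}"

text \<open>An RC tree of T, given as its family F of clusters (nodes of the RC tree), an ordering
  ch X of the children of each node and an ordering bd X of the boundary vertices of each
  cluster (the concrete representation used by an implementation).\<close>
definition is_RC_tree ::
  "'a set \<Rightarrow> 'a set set \<Rightarrow> 'a cluster set \<Rightarrow> ('a cluster \<Rightarrow> 'a cluster list)
     \<Rightarrow> ('a cluster \<Rightarrow> 'a list) \<Rightarrow> bool" where
  "is_RC_tree V E F ch bd \<longleftrightarrow>
     (\<forall>x\<in>elems V E. {x} \<in> F) \<and> elems V E \<in> F \<and>
     (\<forall>X\<in>F. X \<subseteq> elems V E \<and> cluster_connected X \<and> card (boundary X) \<le> 2 \<and>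
             set (bd X) = boundary X \<and> distinct (bd X)) \<and>
     (\<forall>X\<in>F. \<forall>Y\<in>F. X \<subseteq> Y \<or> Y \<subseteq> X \<or> X \<inter> Y = {}) \<and>
     (\<forall>X\<in>F. (\<exists>x. X = {x}) \<longrightarrow> ch X = []) \<and>
     (\<forall>X\<in>F. \<not> (\<exists>x. X = {x}) \<longrightarrow>
        distinct (ch X) \<and>
        set (ch X) = {Y\<in>F. Y \<subset> X \<and> \<not> (\<exists>Z\<in>F. Y \<subset> Z \<and> Z \<subset> X)} \<and>
        \<Union> (set (ch X)) = X \<and> pairwise disjnt (set (ch X)) \<and>
        (\<exists>r. {Inl r} \<in> set (ch X) \<and>
             (\<forall>Y\<in>set (ch X). Y \<noteq> {Inl r} \<longrightarrow> r \<in> boundary Y) \<and>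
             (\<forall>Y\<in>F. r \<in> boundary Y \<longrightarrow> Y \<subset> X)))"

definition idx :: "'b list \<Rightarrow> 'b \<Rightarrow> nat" where
  "idx xs x = (LEAST i. i < length xs \<and> xs ! i = x)"

definition rep :: "('a cluster \<Rightarrow> 'a cluster list) \<Rightarrow> 'a cluster \<Rightarrow> 'a" where
  "rep ch X = (THE r. {Inl r} \<in> set (ch X))"

text \<open>Local combinatorial shape of an internal cluster: number of its boundary vertices,
  position of the representative among the children, and for every child the list of
  its boundary vertices, each encoded as 0 (= the representative) or i+1 (= the i-th
  boundary vertex of the parent).\<close>
type_synonym shape = "nat \<times> nat \<times> nat list list"

definition slot :: "('a cluster \<Rightarrow> 'a cluster list) \<Rightarrow> ('a cluster \<Rightarrow> 'a list)
    \<Rightarrow> 'a cluster \<Rightarrow> 'a \<Rightarrow> nat" where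
  "slot ch bd X b = (if b = rep ch X then 0 else Suc (idx (bd X) b))"

definition shape :: "('a cluster \<Rightarrow> 'a cluster list) \<Rightarrow> ('a cluster \<Rightarrow> 'a list)
    \<Rightarrow> 'a cluster \<Rightarrow> shape" where
  "shape ch bd X = (length (bd X), idx (ch X) {Inl (rep ch X)},
                    map (\<lambda>Y. map (slot ch bd X) (bd Y)) (ch X))"

section \<open>Constant-time computations: fixed straight-line real programs\<close>

datatype expr = Const real | Var nat | Add expr expr | Neg expr | Mul expr expr
  | IfLe expr expr expr expr

primrec eval :: "expr \<Rightarrow> real list \<Rightarrow> real" where
  "eval (Const c) env = c"
| "eval (Var i) env = env ! i"
| "eval (Add a b) env = eval a env + eval b env"
| "eval (Neg a) env = - eval a env"
| "eval (Mul a b) env = eval a env * eval b env"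
| "eval (IfLe a b c d) env = (if eval a env \<le> eval b env then eval c env else eval d env)"

type_synonym prog = "expr list"

definition run :: "prog \<Rightarrow> real list \<Rightarrow> real list" where
  "run p env = map (\<lambda>e. eval e env) p"

record rc_impl =
  val_len :: nat
  leaf_vertex :: prog      \<comment> \<open>initial vertex-leaf value from [initial weight]\<close>
  leaf_edge :: prog        \<comment> \<open>initial edge-leaf value (from [])\<close>
  arg_sub :: prog          \<comment> \<open>update argument of SubtractWeight(v,w), from [w]\<close>
  op_sub :: prog           \<comment> \<open>associative leaf operation for SubtractWeight, on old @ arg\<close>
  arg_join :: prog         \<comment> \<open>update argument of JoinEdge(e), from []\<close>
  op_join :: prog          \<comment> \<open>associative leaf operation for JoinEdge, on old @ arg\<close>
  combine :: "shape \<Rightarrow> prog" \<comment> \<open>cluster value from concatenated children values\<close>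
  q_init :: prog           \<comment> \<open>initial query state from the value of the leaf\<close>
  q_step :: "shape \<Rightarrow> nat \<Rightarrow> prog"
     \<comment> \<open>new state from state @ value of parent @ values of parent's children,
         given parent's shape and the position of the child we come from\<close>
  q_final :: expr

definition assoc_prog :: "nat \<Rightarrow> prog \<Rightarrow> bool" where
  "assoc_prog m p \<longleftrightarrow> (\<forall>a b c. length a = m \<longrightarrow> length b = m \<longrightarrow> length c = m \<longrightarrow>
      run p (run p (a @ b) @ c) = run p (a @ run p (b @ c)))"

definition wf_impl :: "rc_impl \<Rightarrow> bool" where
  "wf_impl I \<longleftrightarrow>
     length (leaf_vertex I) = val_len I \<and> length (leaf_edge I) = val_len I \<and>
     length (arg_sub I) = val_len I \<and> length (op_sub I) = val_len I \<and>
     length (arg_join I) = val_len I \<and> length (op_join I) = val_len I \<and>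
     assoc_prog (val_len I) (op_sub I) \<and> assoc_prog (val_len I) (op_join I)"

datatype 'a update = SubtractWeight 'a real | JoinEdge "'a set"

definition valid_updates :: "'a set \<Rightarrow> 'a set set \<Rightarrow> 'a update list \<Rightarrow> bool" where
  "valid_updates V E hs \<longleftrightarrow> (\<forall>u\<in>set hs. case u of SubtractWeight v w \<Rightarrow> v \<in> V
                                                | JoinEdge e \<Rightarrow> e \<in> E)"

definition cur_weight :: "('a \<Rightarrow> real) \<Rightarrow> 'a update list \<Rightarrow> 'a \<Rightarrow> real" where
  "cur_weight w0 hs v = w0 v - sum_list (map (\<lambda>u. case u of
       SubtractWeight x w \<Rightarrow> (if x = v then w else 0) | JoinEdge e \<Rightarrow> 0) hs)"

definition joined :: "'a update list \<Rightarrow> 'a set set" where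
  "joined hs = {e. JoinEdge e \<in> set hs}"

definition component_weight :: "('a \<Rightarrow> real) \<Rightarrow> 'a update list \<Rightarrow> 'a \<Rightarrow> real" where
  "component_weight w0 hs v =
     (\<Sum>u\<in>{u. (v, u) \<in> (adj_rel (joined hs))\<^sup>*}. cur_weight w0 hs u)"

definition init_leaves :: "rc_impl \<Rightarrow> ('a \<Rightarrow> real) \<Rightarrow> 'a elem \<Rightarrow> real list" where
  "init_leaves I w0 x = (case x of Inl v \<Rightarrow> run (leaf_vertex I) [w0 v]
                                 | Inr e \<Rightarrow> run (leaf_edge I) [])"

fun apply_update :: "rc_impl \<Rightarrow> ('a elem \<Rightarrow> real list) \<Rightarrow> 'a update \<Rightarrow> ('a elem \<Rightarrow> real list)" where
  "apply_update I lv (SubtractWeight v w) =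
     lv(Inl v := run (op_sub I) (lv (Inl v) @ run (arg_sub I) [w]))"
| "apply_update I lv (JoinEdge e) =
     lv(Inr e := run (op_join I) (lv (Inr e) @ run (arg_join I) []))"

definition leaf_values :: "rc_impl \<Rightarrow> ('a \<Rightarrow> real) \<Rightarrow> 'a update list \<Rightarrow> 'a elem \<Rightarrow> real list" where
  "leaf_values I w0 hs = foldl (apply_update I) (init_leaves I w0) hs"

definition consistent_values ::
  "rc_impl \<Rightarrow> 'a cluster set \<Rightarrow> ('a cluster \<Rightarrow> 'a cluster list) \<Rightarrow> ('a cluster \<Rightarrow> 'a list)
     \<Rightarrow> ('a \<Rightarrow> real) \<Rightarrow> 'a update list \<Rightarrow> ('a cluster \<Rightarrow> real list) \<Rightarrow> bool" where
  "consistent_values I F ch bd w0 hs val \<longleftrightarrow>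
     (\<forall>x. {x} \<in> F \<longrightarrow> val {x} = leaf_values I w0 hs x) \<and>
     (\<forall>X\<in>F. \<not> (\<exists>x. X = {x}) \<longrightarrow>
        val X = run (combine I (shape ch bd X)) (concat (map val (ch X))))"

text \<open>Query traversal along the leaf-to-root path (list of clusters, child before parent).\<close>
fun q_walk :: "rc_impl \<Rightarrow> ('a cluster \<Rightarrow> 'a cluster list) \<Rightarrow> ('a cluster \<Rightarrow> 'a list)
    \<Rightarrow> ('a cluster \<Rightarrow> real list) \<Rightarrow> 'a cluster list \<Rightarrow> real list \<Rightarrow> real list" where
  "q_walk I ch bd val (X # P # ps) s =
     q_walk I ch bd val (P # ps)
       (run (q_step I (shape ch bd P) (idx (ch P) X)) (s @ val P @ concat (map val (ch P))))"
| "q_walk I ch bd val _ s = s"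

definition query_result :: "rc_impl \<Rightarrow> ('a cluster \<Rightarrow> 'a cluster list) \<Rightarrow> ('a cluster \<Rightarrow> 'a list)
    \<Rightarrow> ('a cluster \<Rightarrow> real list) \<Rightarrow> 'a cluster list \<Rightarrow> real" where
  "query_result I ch bd val path =
     eval (q_final I) (q_walk I ch bd val path (run (q_init I) (val (hd path))))"

end

theory Submission
  imports Defs
begin


definition oE :: "expr \<Rightarrow> expr \<Rightarrow> expr" where "oE a b = Add a (Add b (Neg (Mul a b)))"
definition nE :: "expr \<Rightarrow> expr" where "nE a = Add (Const 1) (Neg a)"

fun sumE :: "expr list \<Rightarrow> expr" where
  "sumE [] = Const 0" | "sumE (x # xs) = Add x (sumE xs)"
fun orL :: "expr list \<Rightarrow> expr" where
  "orL [] = Const 0" | "orL (x # xs) = oE x (orL xs)"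

definition cv :: "nat \<Rightarrow> nat \<Rightarrow> nat \<Rightarrow> expr" where "cv off j x = Var (off + 4 * j + x)"

definition eE :: "nat \<Rightarrow> shape \<Rightarrow> nat \<Rightarrow> nat \<Rightarrow> expr" where
  "eE off sh a b = (case sh of (nb, ir, ls) \<Rightarrow> orL (map (\<lambda>j. if j \<noteq> ir \<and> (ls ! j = [a, b] \<or> ls ! j = [b, a])
       then cv off j 3 else Const 0) [0..<length ls]))"

definition cE :: "nat \<Rightarrow> shape \<Rightarrow> nat \<Rightarrow> nat \<Rightarrow> expr" where
  "cE off sh a b = (if a = b then Const 1 else
      oE (eE off sh a b) (Mul (eE off sh a (3 - a - b)) (eE off sh (3 - a - b) b)))"

definition contribE :: "nat \<Rightarrow> shape \<Rightarrow> nat \<Rightarrow> nat \<Rightarrow> expr" where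
  "contribE off sh a j = (case sh of (nb, ir, ls) \<Rightarrow> if j = ir then Const 0 else
     (case ls ! j of [p] \<Rightarrow> Mul (cE off sh a p) (cv off j 1)
      | [p, q] \<Rightarrow> Add (Mul (cE off sh a p) (cv off j 1)) (Mul (nE (cv off j 3)) (Mul (cE off sh a q) (cv off j 2)))
      | _ \<Rightarrow> Const 0))"

definition wE :: "nat \<Rightarrow> shape \<Rightarrow> nat \<Rightarrow> expr" where
  "wE off sh a = (case sh of (nb, ir, ls) \<Rightarrow>
     Add (Mul (cE off sh a 0) (cv off ir 0)) (sumE (map (contribE off sh a) [0..<length ls])))"

definition cmbE :: "shape \<Rightarrow> prog" where
  "cmbE sh = [Const 0, wE 0 sh 1, wE 0 sh 2, cE 0 sh 1 2]"

definition gE :: "nat \<Rightarrow> nat \<Rightarrow> expr \<Rightarrow> expr" where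
  "gE nb i e = (if i < nb then e else Const 0)"

definition selE :: "nat \<Rightarrow> nat \<Rightarrow> (nat \<Rightarrow> expr) \<Rightarrow> expr \<Rightarrow> expr" where
  "selE p q F D = Add (Mul (Var 1) (F p)) (Mul (nE (Var 1)) (Add (Mul (Var 2) (F q)) (Mul (nE (Var 2)) D)))"

definition qstepE :: "shape \<Rightarrow> nat \<Rightarrow> prog" where
  "qstepE sh k = (case sh of (nb, ir, ls) \<Rightarrow>
     if k = ir then [wE 7 sh 0, gE nb 0 (cE 7 sh 0 1), gE nb 1 (cE 7 sh 0 2)]
     else [selE (ls ! k ! 0) (ls ! k ! 1) (wE 7 sh) (Var 0),
           selE (ls ! k ! 0) (ls ! k ! 1) (\<lambda>s. gE nb 0 (cE 7 sh s 1)) (Const 0),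
           selE (ls ! k ! 0) (ls ! k ! 1) (\<lambda>s. gE nb 1 (cE 7 sh s 2)) (Const 0)])"

definition myI :: rc_impl where
  "myI = \<lparr> val_len = 4,
     leaf_vertex = [Var 0, Const 0, Const 0, Const 0],
     leaf_edge = [Const 0, Const 0, Const 0, Const 0],
     arg_sub = [Neg (Var 0), Const 0, Const 0, Const 0],
     op_sub = [Add (Var 0) (Var 4), Add (Var 1) (Var 5), Add (Var 2) (Var 6), Add (Var 3) (Var 7)],
     arg_join = [Const 0, Const 0, Const 0, Const 1],
     op_join = [Var 4, Var 5, Var 6, Var 7],
     combine = cmbE, q_init = [Var 0, Const 0, Const 0], q_step = qstepE, q_final = Var 0 \<rparr>"

lemma len4: "length xs = 4 \<Longrightarrow> \<exists>a b c d. xs = [a, b, c, d]"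
  by (cases xs; cases "tl xs"; cases "tl (tl xs)"; cases "tl (tl (tl xs))"; auto)

lemma wf_myI: "wf_impl myI"
  unfolding wf_impl_def assoc_prog_def
proof (intro conjI allI impI)
  fix a b c :: "real list"
  assume "length a = val_len myI" "length b = val_len myI" "length c = val_len myI"
  then obtain a0 a1 a2 a3 b0 b1 b2 b3 c0 c1 c2 c3 where "a = [a0,a1,a2,a3]" "b = [b0,b1,b2,b3]" "c = [c0,c1,c2,c3]"
    by (auto simp: myI_def dest!: len4)
  then show "run (op_sub myI) (run (op_sub myI) (a @ b) @ c) = run (op_sub myI) (a @ run (op_sub myI) (b @ c))"
    and "run (op_join myI) (run (op_join myI) (a @ b) @ c) = run (op_join myI) (a @ run (op_join myI) (b @ c))"
    by (simp_all add: myI_def run_def algebra_simps)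
qed (simp_all add: myI_def)


lemma boundary_Inl[simp]: "boundary {Inl u} = {}" by (auto simp: boundary_def)
lemma boundary_Inr[simp]: "boundary {Inr e} = e" by (auto simp: boundary_def)

locale rcx =
  fixes V :: "'a set" and E :: "'a set set" and F :: "'a cluster set"
    and ch :: "'a cluster \<Rightarrow> 'a cluster list" and bd :: "'a cluster \<Rightarrow> 'a list" and J :: "'a set set"
  assumes tree: "is_tree V E" and rc: "is_RC_tree V E F ch bd" and JE: "J \<subseteq> E"
begin

definition verts :: "'a cluster \<Rightarrow> 'a set" where "verts X = {u. Inl u \<in> X}"
definition edgs :: "'a cluster \<Rightarrow> 'a set set" where "edgs X = {e. Inr e \<in> X}"
definition RR :: "'a cluster \<Rightarrow> ('a \<times> 'a) set" where "RR X = (adj_rel (J \<inter> edgs X))\<^sup>*"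
definition WW :: "('a \<Rightarrow> real) \<Rightarrow> 'a cluster \<Rightarrow> 'a \<Rightarrow> real" where
  "WW cw X b = (\<Sum>u\<in>{u\<in>verts X. (b, u) \<in> RR X}. cw u)"

lemma finV: "finite V" using tree by (simp add: is_tree_def)
lemma E_two: "e \<in> E \<Longrightarrow> \<exists>u w. e = {u, w} \<and> u \<in> V \<and> w \<in> V \<and> u \<noteq> w"
  using tree by (auto simp: is_tree_def)
lemma finE: "finite E"
proof -
  have "E \<subseteq> (\<lambda>(u, w). {u, w}) ` (V \<times> V)" using E_two by fastforce
  then show ?thesis using finV finite_subset by blast
qed
lemma fin_elems: "finite (elems V E)" using finV finE by (simp add: elems_def)

lemma F_elems: "X \<in> F \<Longrightarrow> X \<subseteq> elems V E" using rc by (auto simp: is_RC_tree_def)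
lemma F_fin: "X \<in> F \<Longrightarrow> finite X" using F_elems fin_elems finite_subset by blast
lemma finF: "finite F"
proof -
  have "F \<subseteq> Pow (elems V E)" using F_elems by blast
  then show ?thesis using fin_elems finite_subset by blast
qed
lemma F_ne: "X \<in> F \<Longrightarrow> X \<noteq> {}" using rc by (auto simp: is_RC_tree_def cluster_connected_def)
lemma F_card: "X \<in> F \<Longrightarrow> card (boundary X) \<le> 2" using rc by (auto simp: is_RC_tree_def)
lemma F_bd: "X \<in> F \<Longrightarrow> set (bd X) = boundary X" using rc by (auto simp: is_RC_tree_def)
lemma F_dist: "X \<in> F \<Longrightarrow> distinct (bd X)" using rc by (auto simp: is_RC_tree_def)
lemma F_len: "X \<in> F \<Longrightarrow> length (bd X) \<le> 2"
  using F_card F_bd F_dist distinct_card by metis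
lemma lam: "X \<in> F \<Longrightarrow> Y \<in> F \<Longrightarrow> X \<subseteq> Y \<or> Y \<subseteq> X \<or> X \<inter> Y = {}"
  using rc by (auto simp: is_RC_tree_def)
lemma leafF: "x \<in> elems V E \<Longrightarrow> {x} \<in> F" using rc by (auto simp: is_RC_tree_def)
lemma rootF: "elems V E \<in> F" using rc by (auto simp: is_RC_tree_def)

definition internal :: "'a cluster \<Rightarrow> bool" where
  "internal X \<longleftrightarrow> X \<in> F \<and> \<not> (\<exists>x. X = {x})"

lemma ch_props:
  assumes "internal X"
  shows "distinct (ch X) \<and>
        set (ch X) = {Y\<in>F. Y \<subset> X \<and> \<not> (\<exists>Z\<in>F. Y \<subset> Z \<and> Z \<subset> X)} \<and>
        \<Union> (set (ch X)) = X \<and> pairwise disjnt (set (ch X)) \<and>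
        (\<exists>r. {Inl r} \<in> set (ch X) \<and>
             (\<forall>Y\<in>set (ch X). Y \<noteq> {Inl r} \<longrightarrow> r \<in> boundary Y) \<and>
             (\<forall>Y\<in>F. r \<in> boundary Y \<longrightarrow> Y \<subset> X))"
proof -
  note h = rc[unfolded is_RC_tree_def, THEN conjunct2, THEN conjunct2, THEN conjunct2, THEN conjunct2, THEN conjunct2]
  show ?thesis by (rule h[rule_format]) (use assms in \<open>auto simp: internal_def\<close>)
qed

lemma ch_set: "internal X \<Longrightarrow> set (ch X) = {Y\<in>F. Y \<subset> X \<and> \<not> (\<exists>Z\<in>F. Y \<subset> Z \<and> Z \<subset> X)}"
  by (rule ch_props[THEN conjunct2, THEN conjunct1])
lemma ch_F: "internal X \<Longrightarrow> Y \<in> set (ch X) \<Longrightarrow> Y \<in> F \<and> Y \<subset> X"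
  using ch_set by blast
lemma ch_dist: "internal X \<Longrightarrow> distinct (ch X)" by (rule ch_props[THEN conjunct1])
lemma ch_Un: "internal X \<Longrightarrow> \<Union> (set (ch X)) = X"
  by (rule ch_props[THEN conjunct2, THEN conjunct2, THEN conjunct1])
lemma ch_pw: "internal X \<Longrightarrow> pairwise disjnt (set (ch X))"
  by (rule ch_props[THEN conjunct2, THEN conjunct2, THEN conjunct2, THEN conjunct1])
lemma ch_disj: "internal X \<Longrightarrow> Y1 \<in> set (ch X) \<Longrightarrow> Y2 \<in> set (ch X) \<Longrightarrow> Y1 \<noteq> Y2 \<Longrightarrow> Y1 \<inter> Y2 = {}"
  using ch_pw[of X] unfolding pairwise_def disjnt_def by blast
lemma ch_max: "internal X \<Longrightarrow> Y \<in> F \<Longrightarrow> Y \<subset> X \<Longrightarrow> \<not> (\<exists>Z\<in>F. Y \<subset> Z \<and> Z \<subset> X) \<Longrightarrow> Y \<in> set (ch X)"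
  using ch_set by blast
lemma ch_rep: "internal X \<Longrightarrow> (\<exists>r. {Inl r} \<in> set (ch X) \<and>
             (\<forall>Y\<in>set (ch X). Y \<noteq> {Inl r} \<longrightarrow> r \<in> boundary Y) \<and>
             (\<forall>Y\<in>F. r \<in> boundary Y \<longrightarrow> Y \<subset> X))"
  by (rule ch_props[THEN conjunct2, THEN conjunct2, THEN conjunct2, THEN conjunct2])

lemma rep_props:
  assumes "internal X"
  shows "{Inl (rep ch X)} \<in> set (ch X)"
    "\<And>Y. Y \<in> set (ch X) \<Longrightarrow> Y \<noteq> {Inl (rep ch X)} \<Longrightarrow> rep ch X \<in> boundary Y"
    "\<And>Y. Y \<in> F \<Longrightarrow> rep ch X \<in> boundary Y \<Longrightarrow> Y \<subset> X"
proof -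
  obtain r where r: "{Inl r} \<in> set (ch X)" "\<forall>Y\<in>set (ch X). Y \<noteq> {Inl r} \<longrightarrow> r \<in> boundary Y"
    "\<forall>Y\<in>F. r \<in> boundary Y \<longrightarrow> Y \<subset> X"
    using ch_rep[OF assms] by blast
  have "rep ch X = r" unfolding rep_def
  proof (rule the_equality)
    show "{Inl r} \<in> set (ch X)" by fact
    fix r' assume "{Inl r'} \<in> set (ch X)"
    then show "r' = r" using r(2) by fastforce
  qed
  then show "{Inl (rep ch X)} \<in> set (ch X)"
    "\<And>Y. Y \<in> set (ch X) \<Longrightarrow> Y \<noteq> {Inl (rep ch X)} \<Longrightarrow> rep ch X \<in> boundary Y"
    "\<And>Y. Y \<in> F \<Longrightarrow> rep ch X \<in> boundary Y \<Longrightarrow> Y \<subset> X" using r by auto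
qed

lemma min_cluster:
  assumes W: "W \<in> F" "Inl u \<in> W" "W \<noteq> {Inl u}"
  shows "\<exists>Z. internal Z \<and> Z \<subseteq> W \<and> rep ch Z = u"
proof -
  let ?S = "{Z\<in>F. Inl u \<in> Z \<and> Z \<noteq> {Inl u}}"
  have ne: "W \<in> ?S" using W by auto
  obtain Z where Z: "Z \<in> ?S" and minZ: "\<And>Z'. Z' \<in> ?S \<Longrightarrow> card Z \<le> card Z'"
    using ex_has_least_nat[of "\<lambda>Z. Z \<in> ?S" W card, OF ne] by blast
  have ZF: "Z \<in> F" and uZ: "Inl u \<in> Z" and Zne: "Z \<noteq> {Inl u}" using Z by auto
  have intZ: "internal Z" using ZF uZ Zne unfolding internal_def by blast
  have "Z \<subseteq> W"
  proof -
    have "Z \<subseteq> W \<or> W \<subseteq> Z" using lam[OF ZF W(1)] uZ W(2) by blast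
    moreover have "\<not> W \<subset> Z"
    proof
      assume "W \<subset> Z"
      then have "card W < card Z" by (rule psubset_card_mono[OF F_fin[OF ZF]])
      with minZ[OF ne] show False by simp
    qed
    ultimately show ?thesis by blast
  qed
  have uel: "Inl u \<in> elems V E" using F_elems[OF ZF] uZ by blast
  have "{Inl u} \<in> set (ch Z)"
  proof (rule ch_max[OF intZ leafF[OF uel]])
    show "{Inl u} \<subset> Z" using uZ Zne by blast
    show "\<not> (\<exists>Z'\<in>F. {Inl u} \<subset> Z' \<and> Z' \<subset> Z)"
    proof
      assume "\<exists>Z'\<in>F. {Inl u} \<subset> Z' \<and> Z' \<subset> Z"
      then obtain Z' where "Z' \<in> F" "{Inl u} \<subset> Z'" "Z' \<subset> Z" by blast
      then have "Z' \<in> ?S" using psubset_card_mono[OF F_fin[OF ZF]] by auto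
      have "card Z' < card Z" by (rule psubset_card_mono[OF F_fin[OF ZF] \<open>Z' \<subset> Z\<close>])
      with minZ[OF \<open>Z' \<in> ?S\<close>] show False by simp
    qed
  qed
  then have "rep ch Z = u"
  proof -
    assume a: "{Inl u} \<in> set (ch Z)"
    show ?thesis
    proof (rule ccontr)
      assume "rep ch Z \<noteq> u"
      then have "{Inl u} \<noteq> {Inl (rep ch Z)}" by simp
      from rep_props(2)[OF intZ a this] show False by simp
    qed
  qed
  then show ?thesis using intZ \<open>Z \<subseteq> W\<close> by blast
qed

lemma Inl_rep_notin:
  assumes "internal X" "Y \<in> set (ch X)" "Y \<noteq> {Inl (rep ch X)}"
  shows "Inl (rep ch X) \<notin> Y"
  using ch_disj[OF assms(1) assms(2) rep_props(1)[OF assms(1)]] assms(3) by blast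

lemma rep_in: "internal X \<Longrightarrow> Inl (rep ch X) \<in> X"
  using rep_props(1) ch_F by blast

lemma rep_notbd: "internal X \<Longrightarrow> rep ch X \<notin> boundary X"
  using rep_in by (auto simp: boundary_def)

lemma bd_child:
  assumes X: "internal X" and Y: "Y \<in> set (ch X)" "Y \<noteq> {Inl (rep ch X)}"
  shows "boundary Y \<subseteq> insert (rep ch X) (boundary X)"
proof
  fix u assume u: "u \<in> boundary Y"
  then obtain e where e: "Inr e \<in> Y" "u \<in> e" and uY: "Inl u \<notin> Y" by (auto simp: boundary_def)
  have YX: "Y \<subset> X" and YF: "Y \<in> F" using ch_F[OF X Y(1)] by auto
  show "u \<in> insert (rep ch X) (boundary X)"
  proof (cases "Inl u \<in> X")
    case False
    then show ?thesis using e YX by (auto simp: boundary_def)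
  next
    case True
    then obtain Y' where Y': "Y' \<in> set (ch X)" "Inl u \<in> Y'" using ch_Un[OF X] by blast
    have "Y' \<noteq> Y" using Y' uY by blast
    show ?thesis
    proof (cases "Y' = {Inl (rep ch X)}")
      case True then show ?thesis using Y' by auto
    next
      case False
      have "Y' \<noteq> {Inl u}" using rep_props(2)[OF X Y'(1) False] by auto
      then obtain Z where Z: "internal Z" "Z \<subseteq> Y'" "rep ch Z = u"
        using min_cluster[of Y' u] Y' ch_F[OF X] by blast
      have "Y \<subset> Z" using rep_props(3)[OF Z(1) YF] Z(3) u by simp
      then have "Y \<subseteq> Y'" using Z(2) by blast
      moreover have "Y \<inter> Y' = {}" using ch_disj[OF X Y(1) Y'(1)] \<open>Y' \<noteq> Y\<close> by blast
      ultimately show ?thesis using F_ne[OF YF] by blast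
    qed
  qed
qed

end


context rcx begin

lemma adj_sym: "(x, y) \<in> adj_rel S \<Longrightarrow> (y, x) \<in> adj_rel S"
  unfolding adj_rel_def by (simp add: insert_commute)

lemma sym_adj: "sym (adj_rel S)"
  by (rule symI) (rule adj_sym)

lemma RR_sym: "(x, y) \<in> RR X \<Longrightarrow> (y, x) \<in> RR X"
  unfolding RR_def by (rule symD[OF sym_rtrancl[OF sym_adj]])

lemma RR_trans: "(x, y) \<in> RR X \<Longrightarrow> (y, z) \<in> RR X \<Longrightarrow> (x, z) \<in> RR X"
  unfolding RR_def by (rule rtrancl_trans)

lemma RR_refl[simp]: "(x, x) \<in> RR X" unfolding RR_def by simp

lemma RR_sub: "Y \<subseteq> X \<Longrightarrow> RR Y \<subseteq> RR X"
  unfolding RR_def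
  by (rule rtrancl_mono) (unfold adj_rel_def edgs_def, blast)

lemma RR_edge: "{x, y} \<in> J \<Longrightarrow> Inr {x, y} \<in> X \<Longrightarrow> (x, y) \<in> RR X"
  unfolding RR_def by (rule r_into_rtrancl) (simp add: adj_rel_def edgs_def)

lemma L_int:
  assumes P: "internal P" and Y: "Y \<in> set (ch P)" "Y \<noteq> {Inl (rep ch P)}"
    and x: "Inl x \<in> Y" and e: "Inr e \<in> P" "x \<in> e"
  shows "Inr e \<in> Y"
proof (rule ccontr)
  assume ne: "Inr e \<notin> Y"
  obtain Y' where Y': "Y' \<in> set (ch P)" "Inr e \<in> Y'" using ch_Un[OF P] e(1) by blast
  have "Y' \<noteq> Y" using ne Y' by blast
  then have "Inl x \<notin> Y'" using ch_disj[OF P Y(1) Y'(1)] x by blast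
  then have xb: "x \<in> boundary Y'" using Y'(2) e(2) by (auto simp: boundary_def)
  have "Y' \<noteq> {Inl (rep ch P)}" using Y'(2) by blast
  then have "x \<in> insert (rep ch P) (boundary P)" using bd_child[OF P Y'(1)] xb by blast
  moreover have "x \<noteq> rep ch P" using Inl_rep_notin[OF P Y] x by blast
  moreover have "x \<notin> boundary P" using x ch_F[OF P Y(1)] by (auto simp: boundary_def)
  ultimately show False by blast
qed

lemma adjD: "(x, y) \<in> adj_rel (J \<inter> edgs P) \<Longrightarrow> {x, y} \<in> J \<and> Inr {x, y} \<in> P"
  by (auto simp: adj_rel_def edgs_def)

lemma exit_lem:
  assumes P: "internal P" and Y: "Y \<in> set (ch P)" "Y \<noteq> {Inl (rep ch P)}" and u: "Inl u \<in> Y"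
    and ux: "(u, x) \<in> RR P"
  shows "(Inl x \<in> Y \<and> (u, x) \<in> RR Y) \<or> (\<exists>m\<in>boundary Y. (u, m) \<in> RR Y \<and> (m, x) \<in> RR P)"
proof -
  have "(u, x) \<in> (adj_rel (J \<inter> edgs P))\<^sup>*" using ux by (simp add: RR_def)
  then show ?thesis
proof (induction rule: rtrancl_induct)
  case base
  then show ?case using u by simp
next
  case (step x y)
  have e: "{x, y} \<in> J" "Inr {x, y} \<in> P" using adjD[OF step(2)] by auto
  from step(3) show ?case
  proof
    assume a: "Inl x \<in> Y \<and> (u, x) \<in> RR Y"
    have "Inr {x, y} \<in> Y" using L_int[OF P Y(1) Y(2) conjunct1[OF a] e(2)] by simp
    then have "(x, y) \<in> RR Y" using RR_edge e(1) by blast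
    then have uy: "(u, y) \<in> RR Y" by (rule RR_trans[OF conjunct2[OF a]])
    show ?case
    proof (cases "Inl y \<in> Y")
      case True then show ?thesis using uy by blast
    next
      case False
      then have "y \<in> boundary Y" using \<open>Inr {x, y} \<in> Y\<close> by (auto simp: boundary_def)
      then show ?thesis using uy RR_refl by blast
    qed
  next
    assume "\<exists>m\<in>boundary Y. (u, m) \<in> RR Y \<and> (m, x) \<in> RR P"
    then obtain m where m: "m \<in> boundary Y" "(u, m) \<in> RR Y" "(m, x) \<in> RR P" by blast
    have "(x, y) \<in> RR P" using RR_edge e by blast
    from m(3) this have "(m, y) \<in> RR P" by (rule RR_trans)
    then show ?case using m by blast
  qed
qed
qed

definition NN :: "'a cluster \<Rightarrow> 'a set" where "NN P = insert (rep ch P) (boundary P)"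

definition DD :: "'a cluster \<Rightarrow> ('a \<times> 'a) set" where
  "DD P = {(p, q). p \<noteq> q \<and> (\<exists>Y\<in>set (ch P). Y \<noteq> {Inl (rep ch P)} \<and> p \<in> boundary Y \<and> q \<in> boundary Y
      \<and> (p, q) \<in> RR Y)}"

lemma DD_N: "internal P \<Longrightarrow> (p, q) \<in> DD P \<Longrightarrow> p \<in> NN P \<and> q \<in> NN P"
proof -
  assume P: "internal P" and "(p, q) \<in> DD P"
  then obtain Y where Y: "Y \<in> set (ch P)" "Y \<noteq> {Inl (rep ch P)}" "p \<in> boundary Y" "q \<in> boundary Y"
    unfolding DD_def by blast
  then show ?thesis using bd_child[OF P Y(1,2)] unfolding NN_def by blast
qed

lemma DD_RR: assumes P: "internal P" shows "(DD P)\<^sup>* \<subseteq> RR P"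
proof -
  have "DD P \<subseteq> RR P"
  proof
    fix z assume "z \<in> DD P"
    then obtain p q Y where "z = (p, q)" "Y \<in> set (ch P)" "(p, q) \<in> RR Y" unfolding DD_def by blast
    then show "z \<in> RR P" using RR_sub[of Y P] ch_F[OF P] by blast
  qed
  then have "(DD P)\<^sup>* \<subseteq> (RR P)\<^sup>*" by (rule rtrancl_mono)
  then show ?thesis unfolding RR_def by simp
qed

lemma N_notin: "internal P \<Longrightarrow> Y \<in> set (ch P) \<Longrightarrow> Y \<noteq> {Inl (rep ch P)} \<Longrightarrow> x \<in> NN P \<Longrightarrow> Inl x \<notin> Y"
proof -
  assume a: "internal P" "Y \<in> set (ch P)" "Y \<noteq> {Inl (rep ch P)}" "x \<in> NN P"
  show "Inl x \<notin> Y"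
  proof (cases "x = rep ch P")
    case True then show ?thesis using Inl_rep_notin[OF a(1-3)] by simp
  next
    case False
    then have "x \<in> boundary P" using a(4) unfolding NN_def by simp
    then have "Inl x \<notin> P" unfolding boundary_def by simp
    then show ?thesis using ch_F[OF a(1,2)] by blast
  qed
qed

lemma N_lem:
  assumes P: "internal P" and p: "p \<in> NN P" and px: "(p, x) \<in> RR P"
  shows "(x \<in> NN P \<and> (p, x) \<in> (DD P)\<^sup>*) \<or>
     (\<exists>Y\<in>set (ch P). Y \<noteq> {Inl (rep ch P)} \<and> Inl x \<in> Y \<and> (\<exists>m\<in>boundary Y. (p, m) \<in> (DD P)\<^sup>* \<and> (m, x) \<in> RR Y))"
proof -
  have "(p, x) \<in> (adj_rel (J \<inter> edgs P))\<^sup>*" using px by (simp add: RR_def)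
  then show ?thesis
proof (induction rule: rtrancl_induct)
  case base
  then show ?case using p by simp
next
  case (step x y)
  have e: "{x, y} \<in> J" "Inr {x, y} \<in> P" using adjD[OF step(2)] by auto
  from step(3) show ?case
  proof
    assume a: "x \<in> NN P \<and> (p, x) \<in> (DD P)\<^sup>*"
    obtain Y' where Y': "Y' \<in> set (ch P)" "Inr {x, y} \<in> Y'" using ch_Un[OF P] e(2) by blast
    have Y'r: "Y' \<noteq> {Inl (rep ch P)}" using Y'(2) by blast
    have "Inl x \<notin> Y'" using N_notin[OF P Y'(1) Y'r] a by blast
    then have xb: "x \<in> boundary Y'" using Y'(2) by (auto simp: boundary_def)
    have xy: "(x, y) \<in> RR Y'" using RR_edge e(1) Y'(2) by blast
    show ?case
    proof (cases "Inl y \<in> Y'")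
      case True then show ?thesis using Y' Y'r xb xy a by blast
    next
      case False
      then have yb: "y \<in> boundary Y'" using Y'(2) by (auto simp: boundary_def)
      then have yN: "y \<in> NN P" using bd_child[OF P Y'(1) Y'r] unfolding NN_def by blast
      show ?thesis
      proof (cases "x = y")
        case True then show ?thesis using a by simp
      next
        case False
        then have "(x, y) \<in> DD P" unfolding DD_def using Y' Y'r xb yb xy by blast
        have "(p, y) \<in> (DD P)\<^sup>*" by (rule rtrancl_into_rtrancl[OF conjunct2[OF a] \<open>(x, y) \<in> DD P\<close>])
        then show ?thesis using yN by blast
      qed
    qed
  next
    assume "\<exists>Y\<in>set (ch P). Y \<noteq> {Inl (rep ch P)} \<and> Inl x \<in> Y \<and> (\<exists>m\<in>boundary Y. (p, m) \<in> (DD P)\<^sup>* \<and> (m, x) \<in> RR Y)"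
    then obtain Y m where Y: "Y \<in> set (ch P)" "Y \<noteq> {Inl (rep ch P)}" "Inl x \<in> Y"
      and m: "m \<in> boundary Y" "(p, m) \<in> (DD P)\<^sup>*" "(m, x) \<in> RR Y" by blast
    have "Inr {x, y} \<in> Y" using L_int[OF P Y(1,2) Y(3) e(2)] by simp
    then have "(x, y) \<in> RR Y" using RR_edge e(1) by blast
    then have my: "(m, y) \<in> RR Y" by (rule RR_trans[OF m(3)])
    show ?case
    proof (cases "Inl y \<in> Y")
      case True then show ?thesis using Y m my by blast
    next
      case False
      then have yb: "y \<in> boundary Y" using \<open>Inr {x, y} \<in> Y\<close> by (auto simp: boundary_def)
      then have yN: "y \<in> NN P" using bd_child[OF P Y(1,2)] unfolding NN_def by blast
      show ?thesis
      proof (cases "m = y")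
        case True then show ?thesis using m yN by simp
      next
        case False
        then have "(m, y) \<in> DD P" unfolding DD_def using Y m yb my by blast
        have "(p, y) \<in> (DD P)\<^sup>*" by (rule rtrancl_into_rtrancl[OF m(2) \<open>(m, y) \<in> DD P\<close>])
        then show ?thesis using yN by blast
      qed
    qed
  qed
qed
qed

lemma c1:
  assumes P: "internal P" and "p \<in> NN P" "q \<in> NN P"
  shows "(p, q) \<in> RR P \<longleftrightarrow> (p, q) \<in> (DD P)\<^sup>*"
proof
  assume "(p, q) \<in> RR P"
  from N_lem[OF P assms(2) this] show "(p, q) \<in> (DD P)\<^sup>*"
    using N_notin[OF P _ _ assms(3)] by blast
qed (use DD_RR[OF P] in blast)

lemma c2:
  assumes P: "internal P" and p: "p \<in> NN P" and Y: "Y \<in> set (ch P)" "Y \<noteq> {Inl (rep ch P)}"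
    and u: "Inl u \<in> Y"
  shows "(p, u) \<in> RR P \<longleftrightarrow> (\<exists>m\<in>boundary Y. (p, m) \<in> (DD P)\<^sup>* \<and> (m, u) \<in> RR Y)"
proof
  assume "(p, u) \<in> RR P"
  from N_lem[OF P p this] show "\<exists>m\<in>boundary Y. (p, m) \<in> (DD P)\<^sup>* \<and> (m, u) \<in> RR Y"
  proof
    assume "u \<in> NN P \<and> (p, u) \<in> (DD P)\<^sup>*"
    then show ?thesis using N_notin[OF P Y] u by blast
  next
    assume "\<exists>Y'\<in>set (ch P). Y' \<noteq> {Inl (rep ch P)} \<and> Inl u \<in> Y' \<and> (\<exists>m\<in>boundary Y'. (p, m) \<in> (DD P)\<^sup>* \<and> (m, u) \<in> RR Y')"
    then obtain Y' where Y': "Y' \<in> set (ch P)" "Inl u \<in> Y'" "\<exists>m\<in>boundary Y'. (p, m) \<in> (DD P)\<^sup>* \<and> (m, u) \<in> RR Y'"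
      by blast
    have "Y' = Y" using ch_disj[OF P Y(1) Y'(1)] u Y'(2) by blast
    then show ?thesis using Y'(3) by blast
  qed
next
  assume "\<exists>m\<in>boundary Y. (p, m) \<in> (DD P)\<^sup>* \<and> (m, u) \<in> RR Y"
  then obtain m where "(p, m) \<in> (DD P)\<^sup>*" "(m, u) \<in> RR Y" by blast
  then have "(p, m) \<in> RR P" "(m, u) \<in> RR P" using DD_RR[OF P] RR_sub[of Y P] ch_F[OF P Y(1)] by auto
  then show "(p, u) \<in> RR P" by (rule RR_trans)
qed

end


lemma eval_oE: "eval a env = of_bool A \<Longrightarrow> eval b env = of_bool B \<Longrightarrow> eval (oE a b) env = of_bool (A \<or> B)"
  by (simp add: oE_def)

lemma eval_nE[simp]: "eval (nE a) env = 1 - eval a env" by (simp add: nE_def)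

lemma eval_orL: "(\<And>x. x \<in> set xs \<Longrightarrow> eval (f x) env = of_bool (P x)) \<Longrightarrow>
   eval (orL (map f xs)) env = of_bool (\<exists>x\<in>set xs. P x)"
  by (induction xs) (auto simp: eval_oE)

lemma eval_sumE: "eval (sumE (map f xs)) env = (\<Sum>x\<leftarrow>xs. eval (f x) env)"
  by (induction xs) auto

lemma concat_nth4: "(\<And>v. v \<in> set vals \<Longrightarrow> length v = 4) \<Longrightarrow> j < length vals \<Longrightarrow> x < 4 \<Longrightarrow>
   concat vals ! (4 * j + x) = vals ! j ! x"
proof (induction vals arbitrary: j)
  case Nil then show ?case by simp
next
  case (Cons v vals)
  show ?case
  proof (cases j)
    case 0 then show ?thesis using Cons.prems by (simp add: nth_append)
  next
    case (Suc j')
    have "concat (v # vals) ! (4 * j + x) = concat vals ! (4 * j' + x)"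
      using Cons.prems Suc by (simp add: nth_append)
    also have "\<dots> = vals ! j' ! x" using Cons Suc by simp
    finally show ?thesis using Suc by simp
  qed
qed

lemma eval_cv: "length pre = off \<Longrightarrow> (\<And>v. v \<in> set vals \<Longrightarrow> length v = 4) \<Longrightarrow> j < length vals \<Longrightarrow> x < 4 \<Longrightarrow>
   eval (cv off j x) (pre @ concat vals) = vals ! j ! x"
  by (simp add: cv_def nth_append concat_nth4[symmetric] add.assoc)

lemma idx_nth: "x \<in> set xs \<Longrightarrow> idx xs x < length xs \<and> xs ! idx xs x = x"
proof -
  assume "x \<in> set xs"
  then obtain i where "i < length xs" "xs ! i = x" by (auto simp: in_set_conv_nth)
  then have "i < length xs \<and> xs ! i = x" by simp
  then show ?thesis unfolding idx_def by (rule LeastI)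
qed

lemma idx_dist: "distinct xs \<Longrightarrow> i < length xs \<Longrightarrow> idx xs (xs ! i) = i"
proof -
  assume d: "distinct xs" and i: "i < length xs"
  have "xs ! i \<in> set xs" using i by simp
  then have "idx xs (xs ! i) < length xs \<and> xs ! idx xs (xs ! i) = xs ! i" by (rule idx_nth)
  then show ?thesis using d i nth_eq_iff_index_eq by blast
qed

lemma three_node:
  assumes fin: "finite N" and c: "card N \<le> 3" and D: "D \<subseteq> N \<times> N" and irr: "\<And>x. (x, x) \<notin> D"
    and pq: "(p, q) \<in> D\<^sup>*"
  shows "p = q \<or> (p, q) \<in> D \<or> (\<exists>t. (p, t) \<in> D \<and> (t, q) \<in> D)"
  using pq
proof (induction rule: rtrancl_induct)
  case base then show ?case by simp
next
  case (step x y)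
  from step(3) show ?case
  proof (elim disjE exE conjE)
    assume "p = x" then show ?thesis using step(2) by simp
  next
    assume "(p, x) \<in> D" then show ?thesis using step(2) by blast
  next
    fix t assume pt: "(p, t) \<in> D" and tx: "(t, x) \<in> D"
    show ?thesis
    proof (cases "p = y \<or> t = y \<or> p = x")
      case True then show ?thesis using pt tx step(2) by blast
    next
      case False
      have "p \<noteq> t" "t \<noteq> x" "x \<noteq> y" using irr pt tx step(2) by auto
      then have "card {p, t, x, y} = 4" using False by auto
      moreover have "{p, t, x, y} \<subseteq> N" using D pt tx step(2) by auto
      ultimately have "4 \<le> card N" using card_mono[OF fin] by metis
      then show ?thesis using c by simp
    qed
  qed
qed

lemma sum_distinct_idx: "distinct xs \<Longrightarrow> (\<Sum>j<length xs. f (xs ! j)) = (\<Sum>x\<in>set xs. f x)"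
proof -
  assume d: "distinct xs"
  have "inj_on ((!) xs) {..<length xs}" using d by (simp add: inj_on_def nth_eq_iff_index_eq)
  moreover have "(!) xs ` {..<length xs} = set xs" by (auto simp: in_set_conv_nth)
  ultimately show ?thesis using sum.reindex[of "(!) xs" "{..<length xs}" f] by simp
qed

lemma sum_list_upt: "(\<Sum>j\<leftarrow>[0..<n]. f j) = (\<Sum>j<n. f j)"
  by (simp add: sum_list_distinct_conv_sum_set atLeast0LessThan)

lemma dist2: "distinct xs \<Longrightarrow> set xs = {p, q} \<Longrightarrow> p \<noteq> q \<Longrightarrow> xs = [p, q] \<or> xs = [q, p]"
proof -
  assume d: "distinct xs" and s: "set xs = {p, q}" and pq: "p \<noteq> q"
  have "length xs = 2" using distinct_card[OF d] s pq by simp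
  then obtain a b where "xs = [a, b]"
    by (cases xs; cases "tl xs"; auto)
  then show ?thesis using s d pq by (auto simp: doubleton_eq_iff)
qed


context rcx begin

definition nd :: "'a cluster \<Rightarrow> nat \<Rightarrow> 'a" where
  "nd P i = (if i = 0 then rep ch P else bd P ! (i - 1))"

definition ir :: "'a cluster \<Rightarrow> nat" where "ir P = idx (ch P) {Inl (rep ch P)}"

lemma int_F: "internal P \<Longrightarrow> P \<in> F" by (simp add: internal_def)

lemma nd_N: "internal P \<Longrightarrow> i \<le> length (bd P) \<Longrightarrow> nd P i \<in> NN P"
proof -
  assume P: "internal P" and i: "i \<le> length (bd P)"
  show ?thesis
  proof (cases "i = 0")
    case True then show ?thesis by (simp add: nd_def NN_def)
  next
    case False
    then have "i - 1 < length (bd P)" using i by simp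
    then have "bd P ! (i - 1) \<in> boundary P" using F_bd[OF int_F[OF P]] nth_mem by metis
    then show ?thesis using False by (simp add: nd_def NN_def)
  qed
qed

lemma N_nd: assumes P: "internal P" and b: "b \<in> NN P"
  shows "slot ch bd P b \<le> length (bd P) \<and> nd P (slot ch bd P b) = b"
proof (cases "b = rep ch P")
  case True then show ?thesis by (simp add: slot_def nd_def)
next
  case False
  then have "b \<in> set (bd P)" using b F_bd[OF int_F[OF P]] unfolding NN_def by auto
  from idx_nth[OF this] show ?thesis using False by (simp add: slot_def nd_def)
qed

lemma slot_nd: assumes P: "internal P" and i: "i \<le> length (bd P)"
  shows "slot ch bd P (nd P i) = i"
proof (cases "i = 0")
  case True then show ?thesis by (simp add: slot_def nd_def)
next
  case False
  have "i - 1 < length (bd P)" using i False by simp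
  then have "bd P ! (i - 1) \<in> boundary P" using F_bd[OF int_F[OF P]] nth_mem by metis
  then have "bd P ! (i - 1) \<noteq> rep ch P" using rep_notbd[OF P] by auto
  then show ?thesis using False idx_dist[OF F_dist[OF int_F[OF P]], of "i - 1"] i
    by (simp add: slot_def nd_def)
qed

lemma nd_inj: "internal P \<Longrightarrow> i \<le> length (bd P) \<Longrightarrow> j \<le> length (bd P) \<Longrightarrow> nd P i = nd P j \<Longrightarrow> i = j"
  using slot_nd by metis

lemma NN_ex: "internal P \<Longrightarrow> b \<in> NN P \<Longrightarrow> \<exists>i\<le>length (bd P). b = nd P i"
  using N_nd by metis

lemma NN_fin: "internal P \<Longrightarrow> finite (NN P)"
  unfolding NN_def using F_bd[OF int_F] by (metis List.finite_set finite_insert)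

lemma NN_card: assumes P: "internal P" shows "card (NN P) \<le> 3"
proof -
  have "card (NN P) \<le> Suc (card (boundary P))"
    unfolding NN_def using card_insert_le_m1 F_bd[OF int_F[OF P]]
    by (metis List.finite_set card_insert_if le_SucI le_refl)
  then show ?thesis using F_card[OF int_F[OF P]] by simp
qed

lemma ir_props: assumes P: "internal P"
  shows "ir P < length (ch P)" "ch P ! ir P = {Inl (rep ch P)}"
  using idx_nth[OF rep_props(1)[OF P]] unfolding ir_def by auto

lemma nonrep: assumes P: "internal P" and j: "j < length (ch P)" "j \<noteq> ir P"
  shows "ch P ! j \<in> set (ch P)" "ch P ! j \<noteq> {Inl (rep ch P)}"
proof -
  show "ch P ! j \<in> set (ch P)" using j by simp
  show "ch P ! j \<noteq> {Inl (rep ch P)}"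
  proof
    assume "ch P ! j = {Inl (rep ch P)}"
    then have "ir P = j" unfolding ir_def using idx_dist[OF ch_dist[OF P] j(1)] by simp
    then show False using j by simp
  qed
qed

lemma child_facts: assumes P: "internal P" and Y: "Y \<in> set (ch P)" "Y \<noteq> {Inl (rep ch P)}"
  shows "rep ch P \<in> boundary Y" "boundary Y \<subseteq> NN P" "\<not> (\<exists>x. Y = {Inl x})"
    "1 \<le> length (bd Y)" "length (bd Y) \<le> 2" "Y \<in> F" "set (bd Y) = boundary Y" "distinct (bd Y)"
proof -
  show r: "rep ch P \<in> boundary Y" using rep_props(2)[OF P Y] .
  show "boundary Y \<subseteq> NN P" using bd_child[OF P Y] unfolding NN_def .
  show "\<not> (\<exists>x. Y = {Inl x})" using r by auto
  show YF: "Y \<in> F" using ch_F[OF P Y(1)] by simp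
  show "set (bd Y) = boundary Y" using F_bd[OF YF] .
  show "distinct (bd Y)" using F_dist[OF YF] .
  show "1 \<le> length (bd Y)" using r F_bd[OF YF] by (cases "bd Y") auto
  show "length (bd Y) \<le> 2" using F_len[OF YF] .
qed

definition VI :: "('a \<Rightarrow> real) \<Rightarrow> 'a cluster \<Rightarrow> real list \<Rightarrow> bool" where
  "VI cw X v \<longleftrightarrow> length v = 4 \<and> (\<forall>r. X = {Inl r} \<longrightarrow> v ! 0 = cw r) \<and>
     (\<not> (\<exists>r. X = {Inl r}) \<longrightarrow> (\<forall>i<length (bd X). v ! Suc i = WW cw X (bd X ! i)) \<and>
        (length (bd X) = 2 \<longrightarrow> v ! 3 = of_bool ((bd X ! 0, bd X ! 1) \<in> RR X)))"

definition env_ok :: "('a \<Rightarrow> real) \<Rightarrow> ('a cluster \<Rightarrow> real list) \<Rightarrow> 'a cluster \<Rightarrow> nat \<Rightarrow> real list \<Rightarrow> bool" where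
  "env_ok cw val P off env \<longleftrightarrow> (\<exists>pre. env = pre @ concat (map val (ch P)) \<and> length pre = off) \<and>
     (\<forall>Y\<in>set (ch P). VI cw Y (val Y))"

lemma cv_val: assumes "env_ok cw val P off env" "j < length (ch P)" "x < 4"
  shows "eval (cv off j x) env = val (ch P ! j) ! x"
proof -
  obtain pre where pre: "env = pre @ concat (map val (ch P))" "length pre = off"
    and vi: "\<forall>Y\<in>set (ch P). VI cw Y (val Y)" using assms(1) unfolding env_ok_def by blast
  have l4: "\<And>v. v \<in> set (map val (ch P)) \<Longrightarrow> length v = 4" using vi by (auto simp: VI_def)
  have "eval (cv off j x) (pre @ concat (map val (ch P))) = map val (ch P) ! j ! x"
    by (rule eval_cv[OF pre(2) l4]) (use assms(2,3) in simp_all)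
  then show ?thesis using assms(2) pre(1) by simp
qed

end


context rcx begin

lemma shape_eq: "shape ch bd P = (length (bd P), ir P, map (\<lambda>Y. map (slot ch bd P) (bd Y)) (ch P))"
  by (simp add: shape_def ir_def)

lemma K_val: assumes env: "env_ok cw val P off env" and P: "internal P"
  and j: "j < length (ch P)" "j \<noteq> ir P" and l2: "length (bd (ch P ! j)) = 2"
  shows "eval (cv off j 3) env = of_bool ((bd (ch P ! j) ! 0, bd (ch P ! j) ! 1) \<in> RR (ch P ! j))"
proof -
  have Y: "ch P ! j \<in> set (ch P)" "ch P ! j \<noteq> {Inl (rep ch P)}" using nonrep[OF P j] by auto
  have vi: "VI cw (ch P ! j) (val (ch P ! j))" using env Y(1) unfolding env_ok_def by blast
  have ns: "\<not> (\<exists>x. ch P ! j = {Inl x})" using child_facts(3)[OF P Y] .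
  show ?thesis using cv_val[OF env j(1), of 3] vi ns l2 unfolding VI_def by simp
qed

lemma card2_eq: "finite S \<Longrightarrow> card S \<le> 2 \<Longrightarrow> p \<in> S \<Longrightarrow> q \<in> S \<Longrightarrow> p \<noteq> q \<Longrightarrow> S = {p, q}"
proof -
  assume a: "finite S" "card S \<le> 2" "p \<in> S" "q \<in> S" "p \<noteq> q"
  have sub: "{p, q} \<subseteq> S" using a by auto
  have "card {p, q} = 2" using a by simp
  then show ?thesis using card_subset_eq[OF a(1) sub] a(2) card_mono[OF a(1) sub] by simp
qed

lemma epred: assumes P: "internal P" and ab: "a \<noteq> b"
  shows "(\<exists>j\<in>set [0..<length (ch P)]. j \<noteq> ir P \<and>
      (map (slot ch bd P) (bd (ch P ! j)) = [a, b] \<or> map (slot ch bd P) (bd (ch P ! j)) = [b, a]) \<and>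
      (bd (ch P ! j) ! 0, bd (ch P ! j) ! 1) \<in> RR (ch P ! j))
    \<longleftrightarrow> (a \<le> length (bd P) \<and> b \<le> length (bd P) \<and> (nd P a, nd P b) \<in> DD P)" (is "?L \<longleftrightarrow> ?R")
proof
  assume ?L
  then obtain j where j: "j < length (ch P)" "j \<noteq> ir P"
    and m: "map (slot ch bd P) (bd (ch P ! j)) = [a, b] \<or> map (slot ch bd P) (bd (ch P ! j)) = [b, a]"
    and K: "(bd (ch P ! j) ! 0, bd (ch P ! j) ! 1) \<in> RR (ch P ! j)" by auto
  define Y where "Y = ch P ! j"
  have Y: "Y \<in> set (ch P)" "Y \<noteq> {Inl (rep ch P)}" using nonrep[OF P j] Y_def by auto
  note cf = child_facts[OF P Y]
  from m obtain y0 y1 where bdY: "bd Y = [y0, y1]"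
    and sl: "(slot ch bd P y0 = a \<and> slot ch bd P y1 = b) \<or> (slot ch bd P y0 = b \<and> slot ch bd P y1 = a)"
    unfolding Y_def[symmetric] by (auto simp: map_eq_Cons_conv)
  have yb: "y0 \<in> boundary Y" "y1 \<in> boundary Y" using cf(7) bdY by auto
  have yN: "y0 \<in> NN P" "y1 \<in> NN P" using yb cf(2) by auto
  have y01: "y0 \<noteq> y1" using cf(8) bdY by simp
  have RY0: "(y0, y1) \<in> RR Y" using K bdY unfolding Y_def[symmetric] by simp
  have RY: "(y0, y1) \<in> RR Y" "(y1, y0) \<in> RR Y" using RY0 RR_sym[OF RY0] by auto
  have D01: "(y0, y1) \<in> DD P" "(y1, y0) \<in> DD P" unfolding DD_def using Y yb y01 RY by blast+
  note n0 = N_nd[OF P yN(1)] and n1 = N_nd[OF P yN(2)]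
  from sl show ?R
  proof
    assume "slot ch bd P y0 = a \<and> slot ch bd P y1 = b"
    then show ?R using n0 n1 D01 by auto
  next
    assume "slot ch bd P y0 = b \<and> slot ch bd P y1 = a"
    then show ?R using n0 n1 D01 by auto
  qed
next
  assume R: ?R
  then obtain Y where Y: "Y \<in> set (ch P)" "Y \<noteq> {Inl (rep ch P)}"
    and pb: "nd P a \<in> boundary Y" "nd P b \<in> boundary Y" and pq: "nd P a \<noteq> nd P b"
    and RY: "(nd P a, nd P b) \<in> RR Y" unfolding DD_def by blast
  note cf = child_facts[OF P Y]
  obtain j where j: "j < length (ch P)" "ch P ! j = Y" using Y(1) by (auto simp: in_set_conv_nth)
  have jr: "j \<noteq> ir P" using j Y(2) ir_props[OF P] by auto
  have "boundary Y = {nd P a, nd P b}"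
    using card2_eq[OF _ F_card[OF cf(6)] pb pq] cf(7) by (metis List.finite_set)
  then have "bd Y = [nd P a, nd P b] \<or> bd Y = [nd P b, nd P a]"
    using dist2[OF cf(8)] cf(7) pq by simp
  moreover have sa: "slot ch bd P (nd P a) = a" "slot ch bd P (nd P b) = b" using slot_nd[OF P] R by auto
  ultimately show ?L
  proof (elim disjE)
    assume "bd Y = [nd P a, nd P b]"
    then show ?L using j jr sa RY by (intro bexI[of _ j]) auto
  next
    assume "bd Y = [nd P b, nd P a]"
    then show ?L using j jr sa RR_sym[OF RY] by (intro bexI[of _ j]) auto
  qed
qed

lemma eE_sem: assumes env: "env_ok cw val P off env" and P: "internal P" and ab: "a \<noteq> b"
  shows "eval (eE off (shape ch bd P) a b) env = of_bool (a \<le> length (bd P) \<and> b \<le> length (bd P) \<and> (nd P a, nd P b) \<in> DD P)"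
proof -
  define ls where "ls = map (\<lambda>Y. map (slot ch bd P) (bd Y)) (ch P)"
  define f where "f = (\<lambda>j. if j \<noteq> ir P \<and> (ls ! j = [a, b] \<or> ls ! j = [b, a]) then cv off j 3 else Const 0)"
  define Q where "Q = (\<lambda>j. j \<noteq> ir P \<and>
      (map (slot ch bd P) (bd (ch P ! j)) = [a, b] \<or> map (slot ch bd P) (bd (ch P ! j)) = [b, a]) \<and>
      (bd (ch P ! j) ! 0, bd (ch P ! j) ! 1) \<in> RR (ch P ! j))"
  have e1: "eE off (shape ch bd P) a b = orL (map f [0..<length (ch P)])"
    unfolding eE_def shape_eq ls_def f_def by simp
  have e2: "eval (f j) env = of_bool (Q j)" if "j \<in> set [0..<length (ch P)]" for j
  proof -
    from that have j: "j < length (ch P)" by simp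
    then have lsj: "ls ! j = map (slot ch bd P) (bd (ch P ! j))" unfolding ls_def by simp
    show ?thesis
    proof (cases "j \<noteq> ir P \<and> (ls ! j = [a, b] \<or> ls ! j = [b, a])")
      case True
      then have "length (bd (ch P ! j)) = 2" using lsj by (metis length_map length_Cons list.size(3) numeral_2_eq_2)
      then show ?thesis using True lsj K_val[OF env P j] unfolding f_def Q_def by simp
    next
      case False then show ?thesis using lsj unfolding f_def Q_def by auto
    qed
  qed
  have "eval (orL (map f [0..<length (ch P)])) env = of_bool (\<exists>j\<in>set [0..<length (ch P)]. Q j)"
    using eval_orL[where xs = "[0..<length (ch P)]" and f = f and env = env and P = Q] e2 by blast
  then show ?thesis using e1 epred[OF P ab] unfolding Q_def by simp
qed

end


context rcx begin

lemma nb2: "internal P \<Longrightarrow> length (bd P) \<le> 2" using F_len int_F by blast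

lemma DD_irr: "(x, x) \<notin> DD P" unfolding DD_def by simp

lemma DD_sub: "internal P \<Longrightarrow> DD P \<subseteq> NN P \<times> NN P" using DD_N by auto

lemma cE_sem: assumes env: "env_ok cw val P off env" and P: "internal P"
  and a: "a \<le> length (bd P)" and b: "b \<le> length (bd P)"
  shows "eval (cE off (shape ch bd P) a b) env = of_bool ((nd P a, nd P b) \<in> (DD P)\<^sup>*)"
proof (cases "a = b")
  case True then show ?thesis by (simp add: cE_def)
next
  case False
  define t where "t = 3 - a - b"
  have n2: "length (bd P) \<le> 2" using nb2[OF P] .
  have ta: "t \<noteq> a" "t \<noteq> b" using False a b n2 unfolding t_def by arith+
  have ev: "eval (cE off (shape ch bd P) a b) env =
    of_bool (((nd P a, nd P b) \<in> DD P) \<or> (t \<le> length (bd P) \<and> (nd P a, nd P t) \<in> DD P \<and> (nd P t, nd P b) \<in> DD P))"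
    unfolding cE_def using False ta eE_sem[OF env P] a b unfolding t_def[symmetric]
    by (auto simp: eval_oE)
  have "(nd P a, nd P b) \<in> (DD P)\<^sup>* \<longleftrightarrow>
     ((nd P a, nd P b) \<in> DD P) \<or> (t \<le> length (bd P) \<and> (nd P a, nd P t) \<in> DD P \<and> (nd P t, nd P b) \<in> DD P)"
  proof
    assume "(nd P a, nd P b) \<in> (DD P)\<^sup>*"
    from three_node[OF NN_fin[OF P] NN_card[OF P] DD_sub[OF P] DD_irr this]
    show "((nd P a, nd P b) \<in> DD P) \<or> (t \<le> length (bd P) \<and> (nd P a, nd P t) \<in> DD P \<and> (nd P t, nd P b) \<in> DD P)"
    proof (elim disjE exE conjE)
      assume "nd P a = nd P b"
      then have "a = b" using nd_inj[OF P a b] by simp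
      then show ?thesis using False by simp
    next
      assume "(nd P a, nd P b) \<in> DD P" then show ?thesis by simp
    next
      fix s assume s1: "(nd P a, s) \<in> DD P" and s2: "(s, nd P b) \<in> DD P"
      have "s \<in> NN P" using DD_N[OF P s1] by simp
      then obtain i where i: "i \<le> length (bd P)" "s = nd P i" using NN_ex[OF P] by blast
      have "i \<noteq> a" using s1 i DD_irr by auto
      moreover have "i \<noteq> b" using s2 i DD_irr by auto
      ultimately have "i = t" using i(1) a b n2 False unfolding t_def by arith
      then show ?thesis using s1 s2 i by simp
    qed
  next
    assume "((nd P a, nd P b) \<in> DD P) \<or> (t \<le> length (bd P) \<and> (nd P a, nd P t) \<in> DD P \<and> (nd P t, nd P b) \<in> DD P)"
    then show "(nd P a, nd P b) \<in> (DD P)\<^sup>*"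
      by (meson r_into_rtrancl rtrancl_trans)
  qed
  then show ?thesis using ev by simp
qed

lemma verts_fin: "X \<in> F \<Longrightarrow> finite (verts X)"
proof -
  assume "X \<in> F"
  then have "verts X \<subseteq> V" using F_elems unfolding verts_def elems_def by auto
  then show ?thesis using finV finite_subset by blast
qed

lemma child_val: assumes env: "env_ok cw val P off env" and P: "internal P"
  and j: "j < length (ch P)" "j \<noteq> ir P" and i: "i < length (bd (ch P ! j))"
  shows "eval (cv off j (Suc i)) env = WW cw (ch P ! j) (bd (ch P ! j) ! i)"
proof -
  have Y: "ch P ! j \<in> set (ch P)" "ch P ! j \<noteq> {Inl (rep ch P)}" using nonrep[OF P j] by auto
  have vi: "VI cw (ch P ! j) (val (ch P ! j))" using env Y(1) unfolding env_ok_def by blast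
  have ns: "\<not> (\<exists>x. ch P ! j = {Inl x})" using child_facts(3)[OF P Y] .
  have "Suc i < 4" using i child_facts(5)[OF P Y] by simp
  then show ?thesis using cv_val[OF env j(1), of "Suc i"] vi ns i unfolding VI_def by simp
qed

lemma cE_slot: assumes env: "env_ok cw val P off env" and P: "internal P"
  and a: "a \<le> length (bd P)" and y: "y \<in> NN P"
  shows "eval (cE off (shape ch bd P) a (slot ch bd P y)) env = of_bool ((nd P a, y) \<in> (DD P)\<^sup>*)"
  using cE_sem[OF env P a] N_nd[OF P y] by simp

lemma contrib_sem: assumes env: "env_ok cw val P off env" and P: "internal P"
  and a: "a \<le> length (bd P)" and j: "j < length (ch P)" "j \<noteq> ir P"
  shows "eval (contribE off (shape ch bd P) a j) env = (\<Sum>u\<in>{u\<in>verts (ch P ! j). (nd P a, u) \<in> RR P}. cw u)"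
proof -
  define Y where "Y = ch P ! j"
  have Y: "Y \<in> set (ch P)" "Y \<noteq> {Inl (rep ch P)}" using nonrep[OF P j] Y_def by auto
  note cf = child_facts[OF P Y]
  have aN: "nd P a \<in> NN P" using nd_N[OF P a] .
  have S: "{u\<in>verts Y. (nd P a, u) \<in> RR P} = {u\<in>verts Y. \<exists>m\<in>boundary Y. (nd P a, m) \<in> (DD P)\<^sup>* \<and> (m, u) \<in> RR Y}"
    using c2[OF P aN Y] unfolding verts_def by auto
  define T where "T = (\<lambda>m. {u\<in>verts Y. (m, u) \<in> RR Y})"
  have WWT: "WW cw Y m = sum cw (T m)" for m unfolding WW_def T_def by simp
  have finT: "finite (T m)" for m using verts_fin[OF cf(6)] unfolding T_def by simp
  have ctr: "contribE off (shape ch bd P) a j = (case map (slot ch bd P) (bd Y) of [p] \<Rightarrow> Mul (cE off (shape ch bd P) a p) (cv off j 1)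
      | [p, q] \<Rightarrow> Add (Mul (cE off (shape ch bd P) a p) (cv off j 1)) (Mul (nE (cv off j 3)) (Mul (cE off (shape ch bd P) a q) (cv off j 2)))
      | _ \<Rightarrow> Const 0)"
    unfolding contribE_def using j by (simp add: shape_eq Y_def)
  have l12: "length (bd Y) = 1 \<or> length (bd Y) = 2" using cf(4,5) by linarith
  then show ?thesis
  proof
    assume l1: "length (bd Y) = 1"
    then obtain y0 where bdY: "bd Y = [y0]" by (cases "bd Y") auto
    have bY: "boundary Y = {y0}" using cf(7) bdY by simp
    have y0N: "y0 \<in> NN P" using cf(2) bY by auto
    have "eval (contribE off (shape ch bd P) a j) env = of_bool ((nd P a, y0) \<in> (DD P)\<^sup>*) * WW cw Y y0"
      unfolding ctr bdY using cE_slot[OF env P a y0N] child_val[OF env P j, of 0] bdY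
      by (simp add: Y_def)
    also have "\<dots> = sum cw {u\<in>verts Y. \<exists>m\<in>boundary Y. (nd P a, m) \<in> (DD P)\<^sup>* \<and> (m, u) \<in> RR Y}"
      unfolding bY WWT T_def by simp
    finally show ?thesis using S Y_def by simp
  next
    assume l2: "length (bd Y) = 2"
    then obtain y0 y1 where bdY: "bd Y = [y0, y1]" by (cases "bd Y"; cases "tl (bd Y)") auto
    have bY: "boundary Y = {y0, y1}" using cf(7) bdY by simp
    have y01: "y0 \<noteq> y1" using cf(8) bdY by simp
    have yN: "y0 \<in> NN P" "y1 \<in> NN P" using cf(2) bY by auto
    define c0 where "c0 = ((nd P a, y0) \<in> (DD P)\<^sup>*)"
    define c1 where "c1 = ((nd P a, y1) \<in> (DD P)\<^sup>*)"
    define K where "K = ((y0, y1) \<in> RR Y)"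
    have Kv: "eval (cv off j 3) env = of_bool K"
      using K_val[OF env P j] l2 bdY unfolding K_def Y_def by simp
    have v1: "eval (cv off j 1) env = sum cw (T y0)"
      using child_val[OF env P j, of 0] unfolding Y_def[symmetric] using bdY by (simp add: WWT)
    have v2: "eval (cv off j 2) env = sum cw (T y1)"
      using child_val[OF env P j, of 1] unfolding Y_def[symmetric] using bdY by (simp add: WWT numeral_2_eq_2)
    have ev: "eval (contribE off (shape ch bd P) a j) env =
       of_bool c0 * sum cw (T y0) + (1 - of_bool K) * (of_bool c1 * sum cw (T y1))"
      unfolding ctr bdY using cE_slot[OF env P a yN(1)] cE_slot[OF env P a yN(2)] v1 v2 Kv
      by (simp add: c0_def c1_def)
    have Seq: "{u\<in>verts Y. \<exists>m\<in>boundary Y. (nd P a, m) \<in> (DD P)\<^sup>* \<and> (m, u) \<in> RR Y} =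
        (if c0 then T y0 else {}) \<union> (if c1 then T y1 else {})"
      unfolding bY T_def c0_def c1_def by auto
    show ?thesis
    proof (cases K)
      case True
      have Teq: "T y0 = T y1"
      proof -
        have k: "(y0, y1) \<in> RR Y" using True K_def by simp
        have k': "(y1, y0) \<in> RR Y" using RR_sym[OF k] .
        show ?thesis unfolding T_def using RR_trans[OF k] RR_trans[OF k'] by blast
      qed
      have "(y0, y1) \<in> DD P" "(y1, y0) \<in> DD P"
        using True y01 Y bY RR_sym[of y0 y1 Y] unfolding K_def DD_def by auto
      then have "c0 = c1" unfolding c0_def c1_def by (meson rtrancl.rtrancl_into_rtrancl)
      then show ?thesis using ev Seq S Teq True Y_def by auto
    next
      case False
      have dis: "T y0 \<inter> T y1 = {}"
      proof -
        have "\<not> ((y0, u) \<in> RR Y \<and> (y1, u) \<in> RR Y)" for u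
          using False RR_trans[of y0 u Y y1] RR_sym[of y1 u Y] unfolding K_def by blast
        then show ?thesis unfolding T_def by blast
      qed
      have "sum cw ((if c0 then T y0 else {}) \<union> (if c1 then T y1 else {})) =
          of_bool c0 * sum cw (T y0) + of_bool c1 * sum cw (T y1)"
        using sum.union_disjoint[OF finT finT dis, of cw] by auto
      then show ?thesis using ev Seq S False Y_def by simp
    qed
  qed
qed

end


context rcx begin

lemma nd0[simp]: "nd P 0 = rep ch P" by (simp add: nd_def)

lemma rep_N: "rep ch P \<in> NN P" by (simp add: NN_def)

lemma wE_sem: assumes env: "env_ok cw val P off env" and P: "internal P"
  and a: "a \<le> length (bd P)"
  shows "eval (wE off (shape ch bd P) a) env = (\<Sum>u\<in>{u\<in>verts P. (nd P a, u) \<in> RR P}. cw u)"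
proof -
  define r where "r = rep ch P"
  define n where "n = length (ch P)"
  define A where "A = (\<lambda>Y. {u\<in>verts Y. (nd P a, u) \<in> RR P})"
  have irn: "ir P < n" and chir: "ch P ! ir P = {Inl r}" using ir_props[OF P] n_def r_def by auto
  have aN: "nd P a \<in> NN P" using nd_N[OF P a] .
  have repF: "{Inl r} \<in> set (ch P)" using rep_props(1)[OF P] r_def by simp
  have viR: "VI cw {Inl r} (val {Inl r})" using env repF unfolding env_ok_def by blast
  have vr: "eval (cv off (ir P) 0) env = cw r"
    using cv_val[OF env, of "ir P" 0] irn chir viR n_def unfolding VI_def by simp
  have cr: "eval (cE off (shape ch bd P) a 0) env = of_bool ((nd P a, r) \<in> (DD P)\<^sup>*)"
    using cE_sem[OF env P a, of 0] r_def by simp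
  have ctr: "eval (contribE off (shape ch bd P) a j) env = (if j = ir P then 0 else sum cw (A (ch P ! j)))"
    if "j < n" for j
  proof (cases "j = ir P")
    case True then show ?thesis by (simp add: contribE_def shape_eq)
  next
    case False then show ?thesis using contrib_sem[OF env P a] that n_def A_def by simp
  qed
  have ev: "eval (wE off (shape ch bd P) a) env =
     of_bool ((nd P a, r) \<in> (DD P)\<^sup>*) * cw r + (\<Sum>j<n. (if j = ir P then 0 else sum cw (A (ch P ! j))))"
  proof -
    have "eval (wE off (shape ch bd P) a) env = eval (cE off (shape ch bd P) a 0) env * eval (cv off (ir P) 0) env
       + (\<Sum>j\<leftarrow>[0..<n]. eval (contribE off (shape ch bd P) a j) env)"
      unfolding wE_def by (simp add: shape_eq eval_sumE n_def)
    also have "(\<Sum>j\<leftarrow>[0..<n]. eval (contribE off (shape ch bd P) a j) env) = (\<Sum>j<n. eval (contribE off (shape ch bd P) a j) env)"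
      by (rule sum_list_upt)
    also have "\<dots> = (\<Sum>j<n. (if j = ir P then 0 else sum cw (A (ch P ! j))))"
      by (rule sum.cong) (simp_all add: ctr)
    finally show ?thesis using cr vr by simp
  qed
  have vP: "verts P = (\<Union>Y\<in>set (ch P). verts Y)" using ch_Un[OF P] unfolding verts_def by blast
  have U: "{u\<in>verts P. (nd P a, u) \<in> RR P} = (\<Union>Y\<in>set (ch P). A Y)" unfolding vP A_def by blast
  have finA: "\<And>Y. Y \<in> set (ch P) \<Longrightarrow> finite (A Y)"
    unfolding A_def using verts_fin ch_F[OF P] by auto
  have disA: "\<And>Y1 Y2. Y1 \<in> set (ch P) \<Longrightarrow> Y2 \<in> set (ch P) \<Longrightarrow> Y1 \<noteq> Y2 \<Longrightarrow> A Y1 \<inter> A Y2 = {}"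
    unfolding A_def verts_def using ch_disj[OF P] by blast
  have "sum cw {u\<in>verts P. (nd P a, u) \<in> RR P} = (\<Sum>Y\<in>set (ch P). sum cw (A Y))"
    unfolding U by (rule sum.UNION_disjoint[OF List.finite_set]) (use finA disA in blast)+
  also have "\<dots> = (\<Sum>j<n. sum cw (A (ch P ! j)))"
    using sum_distinct_idx[OF ch_dist[OF P], of "\<lambda>Y. sum cw (A Y)"] n_def by simp
  also have "\<dots> = sum cw (A (ch P ! ir P)) + (\<Sum>j\<in>{..<n} - {ir P}. sum cw (A (ch P ! j)))"
    using sum.remove[of "{..<n}" "ir P" "\<lambda>j. sum cw (A (ch P ! j))"] irn by simp
  also have "(\<Sum>j\<in>{..<n} - {ir P}. sum cw (A (ch P ! j))) = (\<Sum>j<n. (if j = ir P then 0 else sum cw (A (ch P ! j))))"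
  proof -
    have "(\<Sum>j<n. (if j = ir P then 0 else sum cw (A (ch P ! j)))) =
       (if ir P = ir P then 0 else sum cw (A (ch P ! ir P))) + (\<Sum>j\<in>{..<n} - {ir P}. (if j = ir P then 0 else sum cw (A (ch P ! j))))"
      using sum.remove[of "{..<n}" "ir P" "\<lambda>j. (if j = ir P then 0 else sum cw (A (ch P ! j)))"] irn by simp
    also have "\<dots> = (\<Sum>j\<in>{..<n} - {ir P}. sum cw (A (ch P ! j)))" by simp
    finally show ?thesis by simp
  qed
  also have "sum cw (A (ch P ! ir P)) = of_bool ((nd P a, r) \<in> (DD P)\<^sup>*) * cw r"
  proof -
    have "A (ch P ! ir P) = (if (nd P a, r) \<in> RR P then {r} else {})"
      unfolding chir A_def verts_def by auto
    moreover have "(nd P a, r) \<in> RR P \<longleftrightarrow> (nd P a, r) \<in> (DD P)\<^sup>*"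
      using c1[OF P aN rep_N] r_def by simp
    ultimately show ?thesis by simp
  qed
  finally show ?thesis using ev by simp
qed

end


context rcx begin

lemma ndS: "nd P (Suc i) = bd P ! i" by (simp add: nd_def)

lemma bdP_N: "internal P \<Longrightarrow> i < length (bd P) \<Longrightarrow> bd P ! i \<in> NN P"
  using nd_N[of P "Suc i"] by (simp add: ndS)

lemma combine_ok: assumes P: "internal P" and vi: "\<forall>Y\<in>set (ch P). VI cw Y (val Y)"
  shows "VI cw P (run (cmbE (shape ch bd P)) (concat (map val (ch P))))"
proof -
  have env: "env_ok cw val P 0 (concat (map val (ch P)))" unfolding env_ok_def using vi by force
  define v where "v = run (cmbE (shape ch bd P)) (concat (map val (ch P)))"
  have ns: "\<not> (\<exists>r. P = {Inl r})" using P unfolding internal_def by blast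
  have v1: "v ! Suc i = WW cw P (bd P ! i)" if i: "i < length (bd P)" for i
  proof -
    have "i = 0 \<or> i = 1" using i nb2[OF P] by linarith
    then have "v ! Suc i = eval (wE 0 (shape ch bd P) (Suc i)) (concat (map val (ch P)))"
      unfolding v_def run_def cmbE_def by (auto simp: numeral_2_eq_2)
    also have "\<dots> = WW cw P (bd P ! i)" using wE_sem[OF env P, of "Suc i"] i
      unfolding WW_def by (simp add: ndS)
    finally show ?thesis .
  qed
  have v3: "v ! 3 = of_bool ((bd P ! 0, bd P ! 1) \<in> RR P)" if l: "length (bd P) = 2"
  proof -
    have "v ! 3 = eval (cE 0 (shape ch bd P) 1 2) (concat (map val (ch P)))"
      unfolding v_def run_def cmbE_def by (simp add: numeral_3_eq_3)
    also have "\<dots> = of_bool ((nd P 1, nd P 2) \<in> (DD P)\<^sup>*)" using cE_sem[OF env P, of 1 2] l by simp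
    also have "\<dots> = of_bool ((bd P ! 0, bd P ! 1) \<in> RR P)"
      using c1[OF P bdP_N[OF P, of 0] bdP_N[OF P, of 1]] l ndS[of P 0] ndS[of P 1]
      by (simp add: numeral_2_eq_2)
    finally show ?thesis .
  qed
  have "length v = 4" unfolding v_def run_def cmbE_def by simp
  then show ?thesis unfolding VI_def v_def[symmetric] using ns v1 v3 by blast
qed

definition QI :: "('a \<Rightarrow> real) \<Rightarrow> 'a \<Rightarrow> 'a cluster \<Rightarrow> real list \<Rightarrow> bool" where
  "QI cw v C s \<longleftrightarrow> length s = 3 \<and> s ! 0 = (\<Sum>u\<in>{u\<in>verts C. (v, u) \<in> RR C}. cw u) \<and>
     s ! 1 = of_bool (0 < length (bd C) \<and> (v, bd C ! 0) \<in> RR C) \<and>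
     s ! 2 = of_bool (1 < length (bd C) \<and> (v, bd C ! 1) \<in> RR C)"

lemma target_vals: assumes env: "env_ok cw val P off env" and P: "internal P" and y: "y \<in> NN P"
  and eqv: "\<And>x. (v, x) \<in> RR P \<longleftrightarrow> (y, x) \<in> RR P"
  shows "eval (wE off (shape ch bd P) (slot ch bd P y)) env = (\<Sum>u\<in>{u\<in>verts P. (v, u) \<in> RR P}. cw u)"
    "eval (gE (length (bd P)) 0 (cE off (shape ch bd P) (slot ch bd P y) 1)) env =
       of_bool (0 < length (bd P) \<and> (v, bd P ! 0) \<in> RR P)"
    "eval (gE (length (bd P)) 1 (cE off (shape ch bd P) (slot ch bd P y) 2)) env =
       of_bool (1 < length (bd P) \<and> (v, bd P ! 1) \<in> RR P)"
proof -
  have a: "slot ch bd P y \<le> length (bd P)" "nd P (slot ch bd P y) = y" using N_nd[OF P y] by auto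
  show "eval (wE off (shape ch bd P) (slot ch bd P y)) env = (\<Sum>u\<in>{u\<in>verts P. (v, u) \<in> RR P}. cw u)"
    using wE_sem[OF env P a(1)] a(2) eqv by simp
  show "eval (gE (length (bd P)) 0 (cE off (shape ch bd P) (slot ch bd P y) 1)) env =
       of_bool (0 < length (bd P) \<and> (v, bd P ! 0) \<in> RR P)"
  proof (cases "0 < length (bd P)")
    case True
    have "eval (cE off (shape ch bd P) (slot ch bd P y) 1) env = of_bool ((y, nd P 1) \<in> (DD P)\<^sup>*)"
      using cE_sem[OF env P a(1), of 1] True a(2) by simp
    also have "\<dots> = of_bool ((y, bd P ! 0) \<in> RR P)"
      using c1[OF P y bdP_N[OF P True]] ndS[of P 0] by simp
    finally show ?thesis using True eqv by (simp add: gE_def)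
  qed (simp add: gE_def)
  show "eval (gE (length (bd P)) 1 (cE off (shape ch bd P) (slot ch bd P y) 2)) env =
       of_bool (1 < length (bd P) \<and> (v, bd P ! 1) \<in> RR P)"
  proof (cases "1 < length (bd P)")
    case True
    have "eval (cE off (shape ch bd P) (slot ch bd P y) 2) env = of_bool ((y, nd P 2) \<in> (DD P)\<^sup>*)"
      using cE_sem[OF env P a(1), of 2] True a(2) by simp
    also have "\<dots> = of_bool ((y, bd P ! 1) \<in> RR P)"
      using c1[OF P y bdP_N[OF P True]] ndS[of P 1] by (simp add: numeral_2_eq_2)
    finally show ?thesis using True eqv by (simp add: gE_def)
  qed (simp add: gE_def)
qed

end


lemma eval_selE: "env ! 1 = of_bool B0 \<Longrightarrow> env ! 2 = of_bool B1 \<Longrightarrow>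
  eval (selE p q F D) env = (if B0 then eval (F p) env else if B1 then eval (F q) env else eval D env)"
  by (simp add: selE_def)

context rcx begin

lemma no_exit: assumes P: "internal P" and C: "C \<in> set (ch P)" "C \<noteq> {Inl (rep ch P)}" and v: "Inl v \<in> C"
  and ne: "\<And>m. m \<in> boundary C \<Longrightarrow> (v, m) \<notin> RR C"
  shows "(v, x) \<in> RR P \<longleftrightarrow> (Inl x \<in> C \<and> (v, x) \<in> RR C)"
proof
  assume "(v, x) \<in> RR P"
  from exit_lem[OF P C v this] show "Inl x \<in> C \<and> (v, x) \<in> RR C" using ne by blast
next
  assume "Inl x \<in> C \<and> (v, x) \<in> RR C"
  then show "(v, x) \<in> RR P" using RR_sub[of C P] ch_F[OF P C(1)] by blast
qed

lemma qstep_ok: assumes P: "internal P" and C: "C \<in> set (ch P)" and vC: "Inl v \<in> C"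
  and qi: "QI cw v C s" and vi: "\<forall>Y\<in>set (ch P). VI cw Y (val Y)" and lP: "length (val P) = 4"
  shows "QI cw v P (run (qstepE (shape ch bd P) (idx (ch P) C)) (s @ val P @ concat (map val (ch P))))"
proof -
  define env where "env = (s @ val P) @ concat (map val (ch P))"
  have ls3: "length s = 3" using qi unfolding QI_def by simp
  have env: "env_ok cw val P 7 env" unfolding env_ok_def env_def using vi ls3 lP by force
  have e0: "env ! i = s ! i" if "i < 3" for i using that ls3 unfolding env_def by (simp add: nth_append)
  define k where "k = idx (ch P) C"
  have k: "k < length (ch P)" "ch P ! k = C" using idx_nth[OF C] k_def by auto
  define sh where "sh = shape ch bd P"
  define nb where "nb = length (bd P)"
  have run_eq: "run (qstepE (shape ch bd P) (idx (ch P) C)) (s @ val P @ concat (map val (ch P))) =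
     run (qstepE sh k) env" unfolding env_def sh_def k_def by simp
  show ?thesis
  proof (cases "k = ir P")
    case True
    then have Cr: "C = {Inl (rep ch P)}" using k ir_props[OF P] by simp
    then have vr: "v = rep ch P" using vC by simp
    have q: "qstepE sh k = [wE 7 sh 0, gE nb 0 (cE 7 sh 0 1), gE nb 1 (cE 7 sh 0 2)]"
      unfolding qstepE_def sh_def nb_def shape_eq using True by simp
    have s0: "slot ch bd P (rep ch P) = 0" by (simp add: slot_def)
    note tv = target_vals[OF env P rep_N, of v, unfolded s0 sh_def[symmetric] nb_def[symmetric]]
    show ?thesis unfolding run_eq unfolding q QI_def run_def using tv vr by (simp add: nb_def)
  next
    case False
    have Cn: "C \<noteq> {Inl (rep ch P)}" using nonrep[OF P k(1) False] k(2) by simp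
    note cf = child_facts[OF P C Cn]
    have lsk: "(map (\<lambda>Y. map (slot ch bd P) (bd Y)) (ch P)) ! k = map (slot ch bd P) (bd C)"
      using k by simp
    define p where "p = slot ch bd P (bd C ! 0)"
    define q where "q = map (slot ch bd P) (bd C) ! 1"
    have l0: "0 < length (bd C)" using cf(4) by linarith
    have pdef: "map (slot ch bd P) (bd C) ! 0 = p" using nth_map[OF l0] unfolding p_def .
    have qs: "qstepE sh k = [selE p q (wE 7 sh) (Var 0),
           selE p q (\<lambda>s. gE nb 0 (cE 7 sh s 1)) (Const 0),
           selE p q (\<lambda>s. gE nb 1 (cE 7 sh s 2)) (Const 0)]"
      unfolding qstepE_def sh_def nb_def shape_eq using False lsk pdef q_def by simp
    define B0 where "B0 = (0 < length (bd C) \<and> (v, bd C ! 0) \<in> RR C)"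
    define B1 where "B1 = (1 < length (bd C) \<and> (v, bd C ! 1) \<in> RR C)"
    have b0: "env ! 1 = of_bool B0" and b1: "env ! 2 = of_bool B1" and b00: "env ! 0 = s ! 0"
      using e0[of 1] e0[of 2] e0[of 0] qi unfolding QI_def B0_def B1_def by auto
    note sel = eval_selE[OF b0 b1]
    have CP: "RR C \<subseteq> RR P" using RR_sub ch_F[OF P C] by blast
    have eqv_of: "(v, x) \<in> RR P \<longleftrightarrow> (y, x) \<in> RR P" if "(v, y) \<in> RR C" for x y
    proof -
      have vy: "(v, y) \<in> RR P" using that CP by blast
      show ?thesis using RR_trans[OF vy, of x] RR_trans[OF RR_sym[OF vy], of x] by blast
    qed
    show ?thesis
    proof (cases B0)
      case True
      have "bd C ! 0 \<in> boundary C" using cf(7) nth_mem[OF l0] by simp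
      then have y: "bd C ! 0 \<in> NN P" using cf(2) by blast
      note tv = target_vals[OF env P y, of v, folded p_def sh_def nb_def]
      have vy: "(v, bd C ! 0) \<in> RR C" using True B0_def by simp
      have eq: "\<And>x. (v, x) \<in> RR P \<longleftrightarrow> (bd C ! 0, x) \<in> RR P" by (rule eqv_of[OF vy])
      show ?thesis unfolding run_eq unfolding qs QI_def run_def using tv[OF eq] True sel by (simp add: nb_def)
    next
      case nB0: False
      show ?thesis
      proof (cases B1)
        case True
        have l: "1 < length (bd C)" using True B1_def by simp
        have "bd C ! 1 \<in> boundary C" using cf(7) nth_mem[OF l] by simp
        then have y: "bd C ! 1 \<in> NN P" using cf(2) by blast
        have qd: "q = slot ch bd P (bd C ! 1)" unfolding q_def using l by simp
        note tv = target_vals[OF env P y, of v, folded qd sh_def nb_def]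
        have vy: "(v, bd C ! 1) \<in> RR C" using True B1_def by simp
        have eq: "\<And>x. (v, x) \<in> RR P \<longleftrightarrow> (bd C ! 1, x) \<in> RR P" by (rule eqv_of[OF vy])
        show ?thesis unfolding run_eq unfolding qs QI_def run_def using tv[OF eq] True nB0 sel by (simp add: nb_def)
      next
        case nB1: False
        have ne: "(v, m) \<notin> RR C" if "m \<in> boundary C" for m
        proof -
          have "m \<in> set (bd C)" using that cf(7) by simp
          then obtain i where i: "i < length (bd C)" "m = bd C ! i" by (auto simp: in_set_conv_nth)
          have "i = 0 \<or> i = 1" using i cf(5) by linarith
          then show ?thesis using nB0 nB1 i unfolding B0_def B1_def by auto
        qed
        note ne' = no_exit[OF P C Cn vC ne]
        have S: "{u\<in>verts P. (v, u) \<in> RR P} = {u\<in>verts C. (v, u) \<in> RR C}"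
          using ne' ch_F[OF P C] unfolding verts_def by blast
        have nbP: "(v, bd P ! i) \<notin> RR P" if "i < length (bd P)" for i
        proof -
          have "bd P ! i \<in> boundary P" using F_bd[OF int_F[OF P]] nth_mem[OF that] by simp
          then have "Inl (bd P ! i) \<notin> C" using ch_F[OF P C] unfolding boundary_def by blast
          then show ?thesis using ne' by blast
        qed
        have n0: "bd P = [] \<or> (v, bd P ! 0) \<notin> RR P" using nbP[of 0] by (cases "bd P") auto
        have n1: "\<not> (Suc 0 < length (bd P) \<and> (v, bd P ! Suc 0) \<in> RR P)" using nbP[of 1] by auto
        show ?thesis unfolding run_eq unfolding qs QI_def run_def using nB0 nB1 sel b00 qi S n0 n1
          by (simp add: QI_def)
      qed
    qed
  qed
qed

end


lemma cur_weight_snoc: "cur_weight w0 (hs @ [u]) v = cur_weight w0 hs v -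
   (case u of SubtractWeight x w \<Rightarrow> (if x = v then w else 0) | JoinEdge e \<Rightarrow> 0)"
  by (simp add: cur_weight_def)

lemma joined_snoc: "joined (hs @ [u]) = joined hs \<union> (case u of SubtractWeight x w \<Rightarrow> {} | JoinEdge e \<Rightarrow> {e})"
  by (cases u) (auto simp: joined_def)

lemma leaf_vals: "leaf_values myI w0 hs x = (case x of Inl v \<Rightarrow> [cur_weight w0 hs v, 0, 0, 0]
    | Inr e \<Rightarrow> [0, 0, 0, of_bool (e \<in> joined hs)])"
proof (induction hs arbitrary: x rule: rev_induct)
  case Nil
  show ?case by (cases x) (simp_all add: leaf_values_def init_leaves_def myI_def run_def cur_weight_def joined_def)
next
  case (snoc u hs)
  have lv: "leaf_values myI w0 (hs @ [u]) = apply_update myI (leaf_values myI w0 hs) u"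
    by (simp add: leaf_values_def)
  show ?case
  proof (cases u)
    case (SubtractWeight y w)
    show ?thesis unfolding lv using snoc.IH SubtractWeight
      by (cases x) (auto simp: myI_def run_def cur_weight_snoc joined_snoc)
  next
    case (JoinEdge e)
    show ?thesis unfolding lv using snoc.IH JoinEdge
      by (cases x) (auto simp: myI_def run_def cur_weight_snoc joined_snoc)
  qed
qed

lemma sorted_last: "sorted_wrt R xs \<Longrightarrow> x \<in> set xs \<Longrightarrow> x = last xs \<or> R x (last xs)"
proof (induction xs)
  case Nil then show ?case by simp
next
  case (Cons a xs)
  show ?case
  proof (cases "xs = []")
    case True then show ?thesis using Cons.prems by simp
  next
    case False
    have "last xs \<in> set xs" using False by simp
    then show ?thesis using Cons False by auto
  qed
qed

context rcx begin

lemma VI_all: assumes J: "J = joined hs" and cv: "consistent_values myI F ch bd w0 hs val"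
  shows "X \<in> F \<Longrightarrow> VI (cur_weight w0 hs) X (val X)"
proof (induction "card X" arbitrary: X rule: less_induct)
  case less
  show ?case
  proof (cases "\<exists>x. X = {x}")
    case True
    then obtain x where X: "X = {x}" by blast
    have vx: "val X = leaf_values myI w0 hs x" using cv less.prems X unfolding consistent_values_def by blast
    have xe: "x \<in> elems V E" using F_elems[OF less.prems] X by blast
    show ?thesis
    proof (cases x)
      case (Inl r)
      then show ?thesis using vx X by (simp add: VI_def leaf_vals)
    next
      case (Inr e)
      then have eE: "e \<in> E" using xe by (auto simp: elems_def)
      obtain a b where ab: "e = {a, b}" "a \<noteq> b" using E_two[OF eE] by blast
      have bdX: "set (bd X) = {a, b}" "distinct (bd X)" using F_bd[OF less.prems] F_dist[OF less.prems] X Inr ab by auto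
      have bd2: "bd X = [a, b] \<or> bd X = [b, a]" using dist2[OF bdX(2) bdX(1) ab(2)] .
      have ns: "\<not> (\<exists>r. X = {Inl r})" using X Inr by simp
      have vX: "val X = [0, 0, 0, of_bool (e \<in> J)]" using vx Inr J by (simp add: leaf_vals)
      have verts0: "verts X = {}" unfolding verts_def using X Inr by simp
      have K: "(bd X ! 0, bd X ! 1) \<in> RR X \<longleftrightarrow> e \<in> J"
      proof
        assume eJ: "e \<in> J"
        have iX: "Inr e \<in> X" using X Inr by simp
        have r1: "(a, b) \<in> RR X" using RR_edge[of a b X] eJ iX ab(1) by simp
        have r2: "(b, a) \<in> RR X" using RR_sym[OF r1] .
        from bd2 show "(bd X ! 0, bd X ! 1) \<in> RR X"
        proof
          assume "bd X = [a, b]" then show ?thesis using r1 by simp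
        next
          assume "bd X = [b, a]" then show ?thesis using r2 by simp
        qed
      next
        assume r: "(bd X ! 0, bd X ! 1) \<in> RR X"
        show "e \<in> J"
        proof (rule ccontr)
          assume "e \<notin> J"
          then have "J \<inter> edgs X = {}" unfolding edgs_def using X Inr by auto
          then have "RR X = Id" unfolding RR_def adj_rel_def by simp
          then show False using r bd2 ab by auto
        qed
      qed
      have WW0: "WW cw' X y = 0" for cw' y unfolding WW_def verts0 by simp
      have l2: "length (bd X) = 2" using bd2 by auto
      have A: "\<forall>i<length (bd X). val X ! Suc i = WW (cur_weight w0 hs) X (bd X ! i)"
      proof (intro allI impI)
        fix i assume "i < length (bd X)"
        then have "i = 0 \<or> i = 1" using l2 by auto
        then show "val X ! Suc i = WW (cur_weight w0 hs) X (bd X ! i)" using vX WW0 by auto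
      qed
      have B: "val X ! 3 = of_bool ((bd X ! 0, bd X ! 1) \<in> RR X)" using vX K by simp
      have C: "length (val X) = 4" using vX by simp
      show ?thesis unfolding VI_def using A B C ns by blast
    qed
  next
    case False
    then have P: "internal X" using less.prems unfolding internal_def by blast
    have vX: "val X = run (cmbE (shape ch bd X)) (concat (map val (ch X)))"
      using cv less.prems False unfolding consistent_values_def by (simp add: myI_def)
    have "\<forall>Y\<in>set (ch X). VI (cur_weight w0 hs) Y (val Y)"
    proof
      fix Y assume Y: "Y \<in> set (ch X)"
      have "Y \<in> F" "Y \<subset> X" using ch_F[OF P Y] by auto
      then show "VI (cur_weight w0 hs) Y (val Y)"
        using less.hyps[of Y] psubset_card_mono[OF F_fin[OF less.prems]] by blast
    qed
    then show ?thesis using combine_ok[OF P] vX by simp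
  qed
qed

lemma walk: "QI cw v C s \<Longrightarrow> sorted_wrt (\<subset>) (C # rest) \<Longrightarrow> set (C # rest) \<subseteq> {X\<in>F. Inl v \<in> X} \<Longrightarrow>
  (\<forall>Z\<in>F. Inl v \<in> Z \<longrightarrow> C \<subseteq> Z \<longrightarrow> Z \<in> set (C # rest)) \<Longrightarrow> (\<forall>X\<in>F. VI cw X (val X)) \<Longrightarrow>
  QI cw v (last (C # rest)) (q_walk myI ch bd val (C # rest) s)"
proof (induction rest arbitrary: C s)
  case Nil then show ?case by simp
next
  case (Cons P rest)
  have CP: "C \<subset> P" using Cons.prems(2) by simp
  have PF: "P \<in> F" and vP: "Inl v \<in> P" and CF: "C \<in> F" and vC: "Inl v \<in> C" using Cons.prems(3) by auto
  have intP: "internal P"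
  proof -
    have "\<not> (\<exists>x. P = {x})" using CP vC by blast
    then show ?thesis using PF unfolding internal_def by blast
  qed
  have Cch: "C \<in> set (ch P)"
  proof (rule ch_max[OF intP CF CP])
    show "\<not> (\<exists>Z\<in>F. C \<subset> Z \<and> Z \<subset> P)"
    proof
      assume "\<exists>Z\<in>F. C \<subset> Z \<and> Z \<subset> P"
      then obtain Z where Z: "Z \<in> F" "C \<subset> Z" "Z \<subset> P" by blast
      then have "Z \<in> set (C # P # rest)" using Cons.prems(4) vC by blast
      moreover have "Z \<noteq> C" "Z \<noteq> P" using Z by auto
      ultimately have "Z \<in> set rest" by simp
      then have "P \<subset> Z" using Cons.prems(2) by simp
      then show False using Z by blast
    qed
  qed
  have viP: "\<forall>Y\<in>set (ch P). VI cw Y (val Y)" using Cons.prems(5) ch_F[OF intP] by blast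
  have lP: "length (val P) = 4" using Cons.prems(5) PF unfolding VI_def by blast
  have qP: "QI cw v P (run (qstepE (shape ch bd P) (idx (ch P) C)) (s @ val P @ concat (map val (ch P))))"
    by (rule qstep_ok[OF intP Cch vC Cons.prems(1) viP lP])
  have up: "\<forall>Z\<in>F. Inl v \<in> Z \<longrightarrow> P \<subseteq> Z \<longrightarrow> Z \<in> set (P # rest)"
  proof (intro ballI impI)
    fix Z assume Z: "Z \<in> F" "Inl v \<in> Z" "P \<subseteq> Z"
    then have "Z \<in> set (C # P # rest)" using Cons.prems(4) CP by blast
    moreover have "Z \<noteq> C" using Z CP by blast
    ultimately show "Z \<in> set (P # rest)" by simp
  qed
  have "QI cw v (last (P # rest)) (q_walk myI ch bd val (P # rest)
     (run (qstepE (shape ch bd P) (idx (ch P) C)) (s @ val P @ concat (map val (ch P)))))"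
    using Cons.IH[OF qP _ _ up Cons.prems(5)] Cons.prems(2,3) by simp
  then show ?case by (simp add: myI_def)
qed

end

theorem lemma2:
  fixes d :: nat
  shows "\<exists>I. wf_impl I \<and>
    (\<forall>(V :: 'a set) E F ch bd (w0 :: 'a \<Rightarrow> real) hs val path v.
       is_tree V E \<and> degree_bounded d V E \<and> is_RC_tree V E F ch bd \<and>
       valid_updates V E hs \<and> v \<in> V \<and>
       consistent_values I F ch bd w0 hs val \<and>
       set path = {X \<in> F. Inl v \<in> X} \<and> sorted_wrt (\<subset>) path
       \<longrightarrow> query_result I ch bd val path = component_weight w0 hs v)"
proof (intro exI conjI allI impI)
  show "wf_impl myI" by (rule wf_myI)
  fix V :: "'a set" and E F ch bd and w0 :: "'a \<Rightarrow> real" and hs val path v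
  assume H: "is_tree V E \<and> degree_bounded d V E \<and> is_RC_tree V E F ch bd \<and>
       valid_updates V E hs \<and> v \<in> V \<and>
       consistent_values myI F ch bd w0 hs val \<and>
       set path = {X \<in> F. Inl v \<in> X} \<and> sorted_wrt (\<subset>) path"
  then have tree: "is_tree V E" and rc: "is_RC_tree V E F ch bd" and vu: "valid_updates V E hs"
    and vV: "v \<in> V" and cv: "consistent_values myI F ch bd w0 hs val"
    and sp: "set path = {X \<in> F. Inl v \<in> X}" and so: "sorted_wrt (\<subset>) path" by auto
  have JE: "joined hs \<subseteq> E" using vu unfolding valid_updates_def joined_def by fastforce
  interpret R: rcx V E F ch bd "joined hs" using tree rc JE by unfold_locales
  define cw where "cw = cur_weight w0 hs"
  have vi: "\<forall>X\<in>F. R.VI cw X (val X)" using R.VI_all[OF refl cv] cw_def by blast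
  have vel: "Inl v \<in> elems V E" using vV by (simp add: elems_def)
  have leafv: "{Inl v} \<in> set path" using sp R.leafF[OF vel] by simp
  then obtain C0 rest where pth: "path = C0 # rest" by (cases path) auto
  have C0: "C0 = {Inl v}"
  proof (rule ccontr)
    assume "C0 \<noteq> {Inl v}"
    then have "{Inl v} \<in> set rest" using leafv pth by simp
    then have "C0 \<subset> {Inl v}" using so pth by simp
    moreover have "Inl v \<in> C0" using sp pth by auto
    ultimately show False by blast
  qed
  define s0 where "s0 = run (q_init myI) (val (hd path))"
  have vv: "val {Inl v} = [cw v, 0, 0, 0]"
    using cv R.leafF[OF vel] unfolding consistent_values_def cw_def by (simp add: leaf_vals)
  have bdv: "bd {Inl v} = []" using R.F_bd[OF R.leafF[OF vel]] by simp
  have vertsv: "R.verts {Inl v} = {v}" unfolding R.verts_def by auto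
  have qi0: "R.QI cw v C0 s0"
  proof -
    have "{u\<in>R.verts {Inl v}. (v, u) \<in> R.RR {Inl v}} = {v}" using vertsv R.RR_refl by auto
    then show ?thesis unfolding R.QI_def s0_def pth C0 using vv bdv by (simp add: myI_def run_def)
  qed
  have up: "\<forall>Z\<in>F. Inl v \<in> Z \<longrightarrow> C0 \<subseteq> Z \<longrightarrow> Z \<in> set (C0 # rest)" using sp pth by auto
  have qiL: "R.QI cw v (last path) (q_walk myI ch bd val path s0)"
  proof -
    have "sorted_wrt (\<subset>) (C0 # rest)" "set (C0 # rest) \<subseteq> {X\<in>F. Inl v \<in> X}" using so sp pth by auto
    from R.walk[OF qi0 this up vi] show ?thesis using pth by simp
  qed
  have rootin: "elems V E \<in> set path" unfolding sp using R.rootF vel by blast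
  have "last path \<in> set path" using pth by simp
  then have lastF: "last path \<in> F" unfolding sp by blast
  have "last path = elems V E"
  proof -
    have d: "elems V E = last path \<or> elems V E \<subset> last path" using sorted_last[OF so rootin] .
    have "last path \<subseteq> elems V E" using R.F_elems[OF lastF] .
    then show ?thesis using d by blast
  qed
  then have qiR: "R.QI cw v (elems V E) (q_walk myI ch bd val path s0)" using qiL by simp
  have vertsR: "R.verts (elems V E) = V" unfolding R.verts_def elems_def by blast
  have RRR: "R.RR (elems V E) = (adj_rel (joined hs))\<^sup>*"
  proof -
    have "joined hs \<inter> R.edgs (elems V E) = joined hs" using JE unfolding R.edgs_def elems_def by auto
    then show ?thesis unfolding R.RR_def by simp
  qed
  have reachV: "{u. (v, u) \<in> (adj_rel (joined hs))\<^sup>*} = {u\<in>V. (v, u) \<in> (adj_rel (joined hs))\<^sup>*}"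
  proof -
    have "u \<in> V" if "(v, u) \<in> (adj_rel (joined hs))\<^sup>*" for u
      using that
    proof (induction rule: rtrancl_induct)
      case base then show ?case using vV .
    next
      case (step x y)
      then have "{x, y} \<in> E" using JE unfolding adj_rel_def by auto
      then show ?case using R.E_two by (metis doubleton_eq_iff)
    qed
    then show ?thesis by blast
  qed
  have "query_result myI ch bd val path = q_walk myI ch bd val path s0 ! 0"
    unfolding query_result_def s0_def by (simp add: myI_def)
  also have "\<dots> = component_weight w0 hs v"
    using qiR unfolding R.QI_def component_weight_def vertsR RRR reachV cw_def by simp
  finally show "query_result myI ch bd val path = component_weight w0 hs v" .
qed


end
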